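(* (a) (Quasilinear case) Assume (M), (J1), (J2) and (F4). If $u:\mathbb{R}^N\to\mathbb{R}$ is a bounded upper semicontinuous viscosity subsolution of (Q) and $v:\mathbb{R}^N\to\mathbb{R}$ is a bounded lower semicontinuous viscosity supersolution of (Q), then $u\le v$ in $\mathbb{R}^N$. (b) (Fully nonlinear case) Assume (M), (J1), (J2) and (F1)–(F4). If $u:\mathbb{R}^N\to\mathbb{R}$ is a bounded upper semicontinuous viscosity subsolution of (E) and $v:\mathbb{R}^N\to\mathbb{R}$ is a bounded lower semicontinuous viscosity supersolution of (E), then $u\le v$ in $\mathbb{R}^N$.
   Context: Let $N,P\ge1$. Let $\mu_1,\mu_2$ be non-negative Radon measures on $\mathbb{R}^P\setminus\{0\}$, $j_1,j_2:\mathbb{R}^N\times\mathbb{R}^P\to\mathbb{R}^N$ Borel measurable, $F:\mathbb{R}\times\mathbb{R}^N\times\mathbb{R}\to\mathbb{R}$, $f:\mathbb{R}^N\to\mathbb{R}$. For a bounded measurable $u$ on $\mathbb{R}^N$, $p,x\in\mathbb{R}^N$, set $L_1[u,p](x)=\int_{|z|>0}\big(u(x+j_1(p,z))-u(x)-j_1(p,z)\cdot p\big)\,d\mu_1(z)$, $L_2[u,p](x)=\int_{|z|>0}\big(u(x+j_2(p,z))-u(x)\big)\,d\mu_2(z)$, and for $\delta>0$: $L_\delta[\phi,D\phi](x)$ = the $L_1$-integral with $p=D\phi(x)$ restricted to $0<|z|<\delta$, $L^\delta[u,p](x)$ = the $L_1$-integral restricted to $|z|\ge\delta$. Write $L[u,Du](x)=L_1[u,Du(x)](x)+L_2[u,Du(x)](x)$.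 Equations: (E) $F(u,Du,L[u,Du])=f$ in $\mathbb{R}^N$; (Q) $-L[u,Du]+u=f$ in $\mathbb{R}^N$ (i.e. (E) with $F(u,p,\ell)=u-\ell$). A modulus of continuity is a subadditive $\omega:[0,\infty)\to[0,\infty)$ with $\omega(s)\to0$ as $s\to0^+$. (M): $\int_{|z|>0}|z|^2d\mu_1+\int_{|z|>0}d\mu_2<\infty$. (J1): $j_1,j_2$ are continuous in $p$ for a.e. $z$, and for each $r>0$ there is $C_{j,r}$ with $\int_{|z|>0}|j_1(p,z)|^2d\mu_1(z)\le C_{j,r}$ for all $|p|<r$. (J2): for each $r>0$ there is a modulus $\omega_{j,r}$ with $\int_{|z|>0}|j_1(p,z)-j_1(q,z)|^2d\mu_1(z)\le\omega_{j,r}(|p-q|)$ for $|p|,|q|<r$. (F1): $F$ is continuous and $F(u,p,\ell)\ge F(u,p,\ell')$ whenever $\ell\le\ell'$. (F2): for every $M>0$ there is $\gamma_M>0$ with $F(u,p,\ell)-F(v,p,\ell)\ge\gamma_M(u-v)$ for all $p,\ell$ and $-M\le v\le u\le M$. (F3): for every $M,r>0$ there is a modulus $\omega_{M,r}$ with $|F(u,p,\ell)-F(u,q,\ell')|\le\omega_{M,r}(|p-q|+|\ell-\ell'|)$ for $|u|\le M$, $|p|,|q|,|\ell|,|\ell'|\le r$. (F4): $f$ is uniformly continuous on $\mathbb{R}^N$. Viscosity solutions: a bounded usc $u$ is a subsolution of (E) if for every $\delta>0$, every $C^2$ function $\phi$ and every global maximum point $x$ of $u-\phi$: $F\big(u(x),D\phi(x),L_\delta[\phi,D\phi](x)+L^\delta[u,D\phi(x)](x)+L_2[u,D\phi(x)](x)\big)\le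 f(x)$. A bounded lsc $u$ is a supersolution if the reverse inequality $\ge$ holds at every global minimum point of $u-\phi$. A viscosity solution is a bounded continuous function that is both. *)

theory Defs
  imports "HOL-Analysis.Analysis"
begin

definition usc :: "('a::topological_space \<Rightarrow> real) \<Rightarrow> bool" where
  "usc u \<longleftrightarrow> (\<forall>t. open {x. u x < t})"

definition lsc :: "('a::topological_space \<Rightarrow> real) \<Rightarrow> bool" where
  "lsc u \<longleftrightarrow> (\<forall>t. open {x. t < u x})"

definition modulus :: "(real \<Rightarrow> real) \<Rightarrow> bool" where
  "modulus \<omega> \<longleftrightarrow> (\<forall>s\<ge>0. \<omega> s \<ge> 0)
     \<and> (\<forall>s\<ge>0. \<forall>t\<ge>0. \<omega> (s + t) \<le> \<omega> s + \<omega> t)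
     \<and> (\<omega> \<longlongrightarrow> 0) (at_right 0)"

definition C2_grad :: "('n::euclidean_space \<Rightarrow> real) \<Rightarrow> ('n \<Rightarrow> 'n) \<Rightarrow> bool" where
  "C2_grad \<phi> D\<phi> \<longleftrightarrow> (\<forall>x. (\<phi> has_derivative (\<lambda>h. D\<phi> x \<bullet> h)) (at x))
     \<and> (\<exists>D2 :: 'n \<Rightarrow> ('n \<Rightarrow>\<^sub>L 'n). (\<forall>x. (D\<phi> has_derivative blinfun_apply (D2 x)) (at x))
                                 \<and> continuous_on UNIV D2)"

text \<open>Non-negative Radon measure on R^P minus {0}, encoded as a Borel measure on R^P
  giving no mass to {0} and finite mass to compact sets avoiding 0.\<close>
definition radon_punctured :: "'z::euclidean_space measure \<Rightarrow> bool" where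
  "radon_punctured \<mu> \<longleftrightarrow> sets \<mu> = sets borel \<and> emeasure \<mu> {0} = 0
     \<and> (\<forall>K. compact K \<and> 0 \<notin> K \<longrightarrow> emeasure \<mu> K < \<infinity>)"

definition L_small :: "'z::euclidean_space measure \<Rightarrow> ('n::euclidean_space \<Rightarrow> 'z \<Rightarrow> 'n)
    \<Rightarrow> real \<Rightarrow> ('n \<Rightarrow> real) \<Rightarrow> 'n \<Rightarrow> 'n \<Rightarrow> real" where
  "L_small \<mu>1 j1 \<delta> \<phi> p x =
     (LINT z : {z. 0 < norm z \<and> norm z < \<delta>} | \<mu>1. \<phi> (x + j1 p z) - \<phi> x - j1 p z \<bullet> p)"

definition L_big :: "'z::euclidean_space measure \<Rightarrow> ('n::euclidean_space \<Rightarrow> 'z \<Rightarrow> 'n)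
    \<Rightarrow> real \<Rightarrow> ('n \<Rightarrow> real) \<Rightarrow> 'n \<Rightarrow> 'n \<Rightarrow> real" where
  "L_big \<mu>1 j1 \<delta> u p x =
     (LINT z : {z. \<delta> \<le> norm z} | \<mu>1. u (x + j1 p z) - u x - j1 p z \<bullet> p)"

definition L_two :: "'z::euclidean_space measure \<Rightarrow> ('n::euclidean_space \<Rightarrow> 'z \<Rightarrow> 'n)
    \<Rightarrow> ('n \<Rightarrow> real) \<Rightarrow> 'n \<Rightarrow> 'n \<Rightarrow> real" where
  "L_two \<mu>2 j2 u p x = (LINT z : {z. 0 < norm z} | \<mu>2. u (x + j2 p z) - u x)"

definition visc_sub ::
  "(real \<Rightarrow> 'n::euclidean_space \<Rightarrow> real \<Rightarrow> real) \<Rightarrow> ('n \<Rightarrow> real)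
   \<Rightarrow> 'z::euclidean_space measure \<Rightarrow> 'z measure \<Rightarrow> ('n \<Rightarrow> 'z \<Rightarrow> 'n) \<Rightarrow> ('n \<Rightarrow> 'z \<Rightarrow> 'n)
   \<Rightarrow> ('n \<Rightarrow> real) \<Rightarrow> bool" where
  "visc_sub F f \<mu>1 \<mu>2 j1 j2 u \<longleftrightarrow> bounded (range u) \<and> usc u \<and>
     (\<forall>\<delta>>0. \<forall>\<phi> D\<phi> x. C2_grad \<phi> D\<phi> \<longrightarrow> (\<forall>y. u y - \<phi> y \<le> u x - \<phi> x) \<longrightarrow>
        F (u x) (D\<phi> x) (L_small \<mu>1 j1 \<delta> \<phi> (D\<phi> x) x + L_big \<mu>1 j1 \<delta> u (D\<phi> x) x
                          + L_two \<mu>2 j2 u (D\<phi> x) x) \<le> f x)"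

definition visc_super ::
  "(real \<Rightarrow> 'n::euclidean_space \<Rightarrow> real \<Rightarrow> real) \<Rightarrow> ('n \<Rightarrow> real)
   \<Rightarrow> 'z::euclidean_space measure \<Rightarrow> 'z measure \<Rightarrow> ('n \<Rightarrow> 'z \<Rightarrow> 'n) \<Rightarrow> ('n \<Rightarrow> 'z \<Rightarrow> 'n)
   \<Rightarrow> ('n \<Rightarrow> real) \<Rightarrow> bool" where
  "visc_super F f \<mu>1 \<mu>2 j1 j2 v \<longleftrightarrow> bounded (range v) \<and> lsc v \<and>
     (\<forall>\<delta>>0. \<forall>\<phi> D\<phi> x. C2_grad \<phi> D\<phi> \<longrightarrow> (\<forall>y. v x - \<phi> x \<le> v y - \<phi> y) \<longrightarrow>
        F (v x) (D\<phi> x) (L_small \<mu>1 j1 \<delta> \<phi> (D\<phi> x) x + L_big \<mu>1 j1 \<delta> v (D\<phi> x) x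
                          + L_two \<mu>2 j2 v (D\<phi> x) x) \<ge> f x)"

definition hypM :: "'z::euclidean_space measure \<Rightarrow> 'z measure \<Rightarrow> bool" where
  "hypM \<mu>1 \<mu>2 \<longleftrightarrow> (\<integral>\<^sup>+ z \<in> {z. 0 < norm z}. ennreal ((norm z)\<^sup>2) \<partial>\<mu>1)
                     + emeasure \<mu>2 {z. 0 < norm z} < \<infinity>"

definition hypJ1 :: "'z::euclidean_space measure \<Rightarrow> 'z measure
    \<Rightarrow> ('n::euclidean_space \<Rightarrow> 'z \<Rightarrow> 'n) \<Rightarrow> ('n \<Rightarrow> 'z \<Rightarrow> 'n) \<Rightarrow> bool" where
  "hypJ1 \<mu>1 \<mu>2 j1 j2 \<longleftrightarrow>
     (AE z in \<mu>1. continuous_on UNIV (\<lambda>p. j1 p z)) \<and>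
     (AE z in \<mu>2. continuous_on UNIV (\<lambda>p. j2 p z)) \<and>
     (\<forall>r>0. \<exists>C::real. \<forall>p. norm p < r \<longrightarrow>
        (\<integral>\<^sup>+ z \<in> {z. 0 < norm z}. ennreal ((norm (j1 p z))\<^sup>2) \<partial>\<mu>1) \<le> ennreal C)"

definition hypJ2 :: "'z::euclidean_space measure \<Rightarrow> ('n::euclidean_space \<Rightarrow> 'z \<Rightarrow> 'n) \<Rightarrow> bool" where
  "hypJ2 \<mu>1 j1 \<longleftrightarrow>
     (\<forall>r>0. \<exists>\<omega>. modulus \<omega> \<and> (\<forall>p q. norm p < r \<and> norm q < r \<longrightarrow>
        (\<integral>\<^sup>+ z \<in> {z. 0 < norm z}. ennreal ((norm (j1 p z - j1 q z))\<^sup>2) \<partial>\<mu>1)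
          \<le> ennreal (\<omega> (norm (p - q)))))"

definition hypF1 :: "(real \<Rightarrow> 'n::euclidean_space \<Rightarrow> real \<Rightarrow> real) \<Rightarrow> bool" where
  "hypF1 F \<longleftrightarrow> continuous_on UNIV (\<lambda>(u, p, l). F u p l)
     \<and> (\<forall>u p l l'. l \<le> l' \<longrightarrow> F u p l \<ge> F u p l')"

definition hypF2 :: "(real \<Rightarrow> 'n::euclidean_space \<Rightarrow> real \<Rightarrow> real) \<Rightarrow> bool" where
  "hypF2 F \<longleftrightarrow> (\<forall>M>0. \<exists>\<gamma>>0. \<forall>u v p l. -M \<le> v \<and> v \<le> u \<and> u \<le> M \<longrightarrow>
                     F u p l - F v p l \<ge> \<gamma> * (u - v))"

definition hypF3 :: "(real \<Rightarrow> 'n::euclidean_space \<Rightarrow> real \<Rightarrow> real) \<Rightarrow> bool" where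
  "hypF3 F \<longleftrightarrow> (\<forall>M>0. \<forall>r>0. \<exists>\<omega>. modulus \<omega> \<and>
     (\<forall>u p q l l'. \<bar>u\<bar> \<le> M \<and> norm p \<le> r \<and> norm q \<le> r \<and> \<bar>l\<bar> \<le> r \<and> \<bar>l'\<bar> \<le> r \<longrightarrow>
        \<bar>F u p l - F u q l'\<bar> \<le> \<omega> (norm (p - q) + \<bar>l - l'\<bar>)))"

definition hypF4 :: "('n::euclidean_space \<Rightarrow> real) \<Rightarrow> bool" where
  "hypF4 f \<longleftrightarrow> uniformly_continuous_on UNIV f"

end

theory Submission
  imports Defs "HOL-Analysis.Analysis"
begin

lemma usc_measurable:
  fixes u :: "'a::euclidean_space \<Rightarrow> real"
  assumes "usc u" shows "u \<in> borel_measurable borel"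
  unfolding borel_measurable_iff_less
  using assms unfolding usc_def by auto

lemma lsc_measurable:
  fixes u :: "'a::euclidean_space \<Rightarrow> real"
  assumes "lsc u" shows "u \<in> borel_measurable borel"
  unfolding borel_measurable_iff_greater
  using assms unfolding lsc_def by auto

lemma usc_max_compact:
  fixes g :: "'a::topological_space \<Rightarrow> real"
  assumes K: "compact K" "K \<noteq> {}" and g: "\<And>t. open {x. g x < t}"
  shows "\<exists>x\<in>K. \<forall>y\<in>K. g y \<le> g x"
proof (rule ccontr)
  assume "\<not> ?thesis"
  then have H: "\<forall>x\<in>K. \<exists>y\<in>K. g x < g y" by (auto simp: not_le)
  then have "K \<subseteq> (\<Union>y\<in>K. {x. g x < g y})" by blast
  from compactE_image[OF K(1) _ this] g obtain D where
    D: "D \<subseteq> K" "finite D" "K \<subseteq> (\<Union>y\<in>D. {x. g x < g y})" by metis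
  then have "D \<noteq> {}" using K(2) by auto
  define t where "t = Max (g ` D)"
  have "t \<in> g ` D" unfolding t_def using D \<open>D \<noteq> {}\<close> by (intro Max_in) auto
  then obtain y where y: "y \<in> D" "g y = t" by auto
  have tmax: "\<And>y'. y' \<in> D \<Longrightarrow> g y' \<le> t" unfolding t_def using D by auto
  from y D obtain y' where "y' \<in> D" "g y < g y'" by blast
  with tmax y show False by force
qed

lemma usc_global_max:
  fixes g :: "'a::euclidean_space \<Rightarrow> real"
  assumes g: "\<And>t. open {x. g x < t}" and R: "\<And>y. norm y > R \<Longrightarrow> g y < g x0"
  shows "\<exists>x. \<forall>y. g y \<le> g x"
proof -
  have x0: "x0 \<in> cball 0 R" using R[of x0] by (force simp: not_less mem_cball)
  obtain x where x: "x \<in> cball 0 R" "\<forall>y\<in>cball 0 R. g y \<le> g x"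
    using usc_max_compact[OF compact_cball _ g, of 0 R] x0 by blast
  have "g y \<le> g x" for y
  proof (cases "y \<in> cball 0 R")
    case True then show ?thesis using x by auto
  next
    case False then have "g y < g x0" using R by auto
    moreover have "g x0 \<le> g x" using x x0 by blast
    ultimately show ?thesis by linarith
  qed
  then show ?thesis by blast
qed

lemma usc_add:
  fixes g h :: "'a::topological_space \<Rightarrow> real"
  assumes "\<And>t. open {x. g x < t}" "\<And>t. open {x. h x < t}"
  shows "open {x. g x + h x < t}"
proof -
  have "{x. g x + h x < t} = (\<Union>s. {x. g x < s} \<inter> {x. h x < t - s})"
  proof safe
    fix x assume "g x + h x < t"
    then show "x \<in> (\<Union>s. {x. g x < s} \<inter> {x. h x < t - s})"
      by (intro UN_I[of "g x + (t - g x - h x)/2"]) (auto simp: field_simps)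
  qed auto
  then show ?thesis using assms by (auto intro!: open_UN open_Int)
qed

lemma C2_quad:
  fixes y0 :: "'n::euclidean_space"
  shows "C2_grad (\<lambda>x. c * (norm (x - y0))\<^sup>2 + d * (norm x)\<^sup>2) (\<lambda>x. (2*c) *\<^sub>R (x - y0) + (2*d) *\<^sub>R x)"
  unfolding C2_grad_def
proof (intro conjI allI exI[of _ "\<lambda>x. (2*c+2*d) *\<^sub>R id_blinfun"])
  fix x :: 'n
  show "((\<lambda>x. c * (norm (x - y0))\<^sup>2 + d * (norm x)\<^sup>2) has_derivative
     (\<lambda>h. ((2*c) *\<^sub>R (x - y0) + (2*d) *\<^sub>R x) \<bullet> h)) (at x)"
    unfolding power2_norm_eq_inner
    by (auto intro!: derivative_eq_intros simp: algebra_simps inner_commute)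
  show "((\<lambda>x. (2*c) *\<^sub>R (x - y0) + (2*d) *\<^sub>R x) has_derivative
     blinfun_apply ((2*c+2*d) *\<^sub>R id_blinfun)) (at x)"
    by (auto intro!: derivative_eq_intros simp: algebra_simps fun_eq_iff blinfun.add_left scaleR_blinfun.rep_eq)
qed simp

lemma meas_slice:
  fixes j :: "'n::euclidean_space \<Rightarrow> 'z::euclidean_space \<Rightarrow> 'n"
  assumes "(\<lambda>(p, z). j p z) \<in> borel_measurable borel"
  shows "(\<lambda>z. j p z) \<in> borel_measurable borel"
proof -
  have "(\<lambda>z. (p, z)) \<in> borel \<rightarrow>\<^sub>M (borel :: ('n \<times> 'z) measure)"
    by (intro borel_measurable_continuous_onI continuous_intros)
  from measurable_compose[OF this assms] show ?thesis by simp
qed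

lemma nn_to_int:
  fixes g :: "'a \<Rightarrow> real"
  assumes g: "g \<in> borel_measurable M" "\<And>z. 0 \<le> g z" and S: "S \<in> sets M"
    and b: "(\<integral>\<^sup>+ z \<in> S. ennreal (g z) \<partial>M) \<le> ennreal C"
  shows "set_integrable M S g" "(LINT z:S|M. g z) \<le> max C 0"
proof -
  have eq: "(\<integral>\<^sup>+ z \<in> S. ennreal (g z) \<partial>M) = (\<integral>\<^sup>+ z. ennreal (indicator S z *\<^sub>R g z) \<partial>M)"
    by (rule nn_integral_cong) (simp split: split_indicator)
  have fin: "(\<integral>\<^sup>+ z. ennreal (indicator S z *\<^sub>R g z) \<partial>M) < \<infinity>"
    using le_less_trans[OF b ennreal_less_top] eq by simp
  show int: "set_integrable M S g"
    unfolding set_integrable_def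
    by (rule integrableI_nonneg) (use g S fin in \<open>auto simp: split: split_indicator\<close>)
  have "ennreal (LINT z:S|M. g z) = (\<integral>\<^sup>+ z. ennreal (indicator S z *\<^sub>R g z) \<partial>M)"
    unfolding set_lebesgue_integral_def
    by (rule nn_integral_eq_integral[symmetric]) (use int g in \<open>auto simp: set_integrable_def split: split_indicator\<close>)
  also have "\<dots> \<le> ennreal C" using b eq by simp
  also have "\<dots> \<le> ennreal (max C 0)" by (rule ennreal_leI) simp
  finally have "ennreal (LINT z:S|M. g z) \<le> ennreal (max C 0)" .
  then show "(LINT z:S|M. g z) \<le> max C 0"
    by (subst (asm) ennreal_le_iff) auto
qed

locale nl =
  fixes \<mu>1 \<mu>2 :: "'z::euclidean_space measure" and j1 j2 :: "'n::euclidean_space \<Rightarrow> 'z \<Rightarrow> 'n"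
  assumes s1: "sets \<mu>1 = sets borel" and s2: "sets \<mu>2 = sets borel"
    and j1m: "(\<lambda>(p, z). j1 p z) \<in> borel_measurable borel"
    and j2m: "(\<lambda>(p, z). j2 p z) \<in> borel_measurable borel"
    and M: "hypM \<mu>1 \<mu>2" and J1: "hypJ1 \<mu>1 \<mu>2 j1 j2" and J2: "hypJ2 \<mu>1 j1"
begin

lemma meas1: "f \<in> borel_measurable borel \<Longrightarrow> f \<in> borel_measurable \<mu>1"
  using measurable_cong_sets[OF s1 refl] by auto
lemma meas2: "f \<in> borel_measurable borel \<Longrightarrow> f \<in> borel_measurable \<mu>2"
  using measurable_cong_sets[OF s2 refl] by auto
lemma sets1: "S \<in> sets borel \<Longrightarrow> S \<in> sets \<mu>1" using s1 by auto
lemma sets2: "S \<in> sets borel \<Longrightarrow> S \<in> sets \<mu>2" using s2 by auto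

lemma jb1[measurable]: "(\<lambda>z. j1 p z) \<in> borel_measurable borel" by (rule meas_slice[OF j1m])
lemma jb2[measurable]: "(\<lambda>z. j2 p z) \<in> borel_measurable borel" by (rule meas_slice[OF j2m])

lemma set_pos[measurable]: "{z::'z. 0 < norm z} \<in> sets borel" by measurable
lemma set_ge[measurable]: "{z::'z. d \<le> norm z} \<in> sets borel" by measurable
lemma set_small[measurable]: "{z::'z. 0 < norm z \<and> norm z < d} \<in> sets borel" by measurable

lemma fin2: "emeasure \<mu>2 {z. 0 < norm z} < \<infinity>"
  using M unfolding hypM_def by (auto simp: top_unique less_top)

lemma fin1:
  assumes d: "d > 0" shows "emeasure \<mu>1 {z. d \<le> norm z} < \<infinity>"
proof -
  have A: "(\<integral>\<^sup>+ z \<in> {z. 0 < norm z}. ennreal ((norm z)\<^sup>2) \<partial>\<mu>1) < \<infinity>"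
    using M unfolding hypM_def by (auto simp: top_unique less_top)
  have "ennreal (d\<^sup>2) * emeasure \<mu>1 {z. d \<le> norm z} = (\<integral>\<^sup>+ z. ennreal (d\<^sup>2) * indicator {z. d \<le> norm z} z \<partial>\<mu>1)"
    by (rule nn_integral_cmult_indicator[symmetric]) (intro sets1, measurable)
  also have "\<dots> \<le> (\<integral>\<^sup>+ z \<in> {z. 0 < norm z}. ennreal ((norm z)\<^sup>2) \<partial>\<mu>1)"
  proof (rule nn_integral_mono)
    fix z :: 'z
    show "ennreal (d\<^sup>2) * indicator {z. d \<le> norm z} z \<le> ennreal ((norm z)\<^sup>2) * indicator {z. 0 < norm z} z"
    proof (cases "d \<le> norm z")
      case True then have "d\<^sup>2 \<le> (norm z)\<^sup>2" using d by (intro power_mono) auto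
      with True d show ?thesis by (auto simp: indicator_def)
    qed (auto simp: indicator_def)
  qed
  finally have "ennreal (d\<^sup>2) * emeasure \<mu>1 {z. d \<le> norm z} < \<infinity>" using A by (simp add: le_less_trans)
  then show ?thesis using d by (auto simp: ennreal_mult_less_top)
qed

end

lemma quad_id:
  fixes x y0 a :: "'n::euclidean_space"
  shows "(c * (norm (x + a - y0))\<^sup>2 + d * (norm (x + a))\<^sup>2) - (c * (norm (x - y0))\<^sup>2 + d * (norm x)\<^sup>2)
     - a \<bullet> ((2*c) *\<^sub>R (x - y0) + (2*d) *\<^sub>R x) = (c + d) * (norm a)\<^sup>2"
  by (simp add: power2_norm_eq_inner inner_simps inner_commute algebra_simps)

lemma alg_id:
  fixes X Y a b :: "'n::euclidean_space"
  shows "k*((norm (X + a - (Y + b)))\<^sup>2 - (norm (X - Y))\<^sup>2) + bt*((norm (X + a))\<^sup>2 + (norm (Y + b))\<^sup>2 - (norm X)\<^sup>2 - (norm Y)\<^sup>2)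
     - a \<bullet> ((2*k) *\<^sub>R (X - Y) + (2*bt) *\<^sub>R X) + b \<bullet> ((2*(-k)) *\<^sub>R (Y - X) + (2*(-bt)) *\<^sub>R Y)
     = k*(norm (a - b))\<^sup>2 + bt*((norm a)\<^sup>2 + (norm b)\<^sup>2)"
  by (simp add: power2_norm_eq_inner inner_simps inner_commute algebra_simps)

lemma Lsmall_quad:
  fixes x y0 :: "'n::euclidean_space"
  assumes "S = {z. 0 < norm z \<and> norm z < \<delta>}"
  shows "L_small \<mu> j \<delta> (\<lambda>x. c * (norm (x - y0))\<^sup>2 + d * (norm x)\<^sup>2) ((2*c) *\<^sub>R (x - y0) + (2*d) *\<^sub>R x) x
     = (c + d) * (LINT z:S|\<mu>. (norm (j ((2*c) *\<^sub>R (x - y0) + (2*d) *\<^sub>R x) z))\<^sup>2)"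
  unfolding L_small_def assms by (simp only: quad_id set_integral_mult_right)

lemma norm_diff_sq: "(norm (a - b))\<^sup>2 \<le> 2*(norm a)\<^sup>2 + 2*(norm (b::'a::real_normed_vector))\<^sup>2"
proof -
  have "norm (a - b) \<le> norm a + norm b" by (rule norm_triangle_ineq4)
  then have "(norm (a - b))\<^sup>2 \<le> (norm a + norm b)\<^sup>2" by (intro power_mono) auto
  also have "\<dots> \<le> 2*(norm a)\<^sup>2 + 2*(norm b)\<^sup>2"
  proof -
    have "0 \<le> (norm a - norm b)\<^sup>2" by simp
    then show ?thesis unfolding power2_sum power2_diff by linarith
  qed
  finally show ?thesis .
qed

lemma le1sq: "(t::real) \<le> 1 + t\<^sup>2"
proof -
  have "0 \<le> (t - 1)\<^sup>2" by simp
  then have "0 \<le> t\<^sup>2 + 1 - 2*t" by (simp add: power2_diff)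
  then show ?thesis using zero_le_power2[of t] by linarith
qed

context nl begin

lemma sqint1: "set_integrable \<mu>1 {z. 0 < norm z} (\<lambda>z. (norm (j1 P z))\<^sup>2)"
proof -
  have "norm P + 1 > 0" by (simp add: add_nonneg_pos)
  then obtain C where C: "\<forall>p. norm p < norm P + 1 \<longrightarrow>
      (\<integral>\<^sup>+ z \<in> {z. 0 < norm z}. ennreal ((norm (j1 p z))\<^sup>2) \<partial>\<mu>1) \<le> ennreal C"
    using J1 unfolding hypJ1_def by blast
  show ?thesis
    by (rule nn_to_int(1)[where C=C]) (use C in \<open>auto intro!: meas1 sets1\<close>)
qed

lemma sqint1_bound:
  assumes "\<forall>p. norm p < r \<longrightarrow> (\<integral>\<^sup>+ z \<in> {z. 0 < norm z}. ennreal ((norm (j1 p z))\<^sup>2) \<partial>\<mu>1) \<le> ennreal C"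
    and "norm P < r"
  shows "(LINT z:{z. 0 < norm z}|\<mu>1. (norm (j1 P z))\<^sup>2) \<le> max C 0"
  by (rule nn_to_int(2)) (use assms in \<open>auto intro!: meas1 sets1\<close>)

lemma sqint_diff: "set_integrable \<mu>1 {z. 0 < norm z} (\<lambda>z. (norm (j1 P z - j1 Q z))\<^sup>2)"
proof (rule set_integrable_bound[where f="\<lambda>z. 2*(norm (j1 P z))\<^sup>2 + 2*(norm (j1 Q z))\<^sup>2"])
  show "set_integrable \<mu>1 {z. 0 < norm z} (\<lambda>z. 2*(norm (j1 P z))\<^sup>2 + 2*(norm (j1 Q z))\<^sup>2)"
    using sqint1[of P] sqint1[of Q] by (intro set_integral_add) auto
  show "set_borel_measurable \<mu>1 {z. 0 < norm z} (\<lambda>z. (norm (j1 P z - j1 Q z))\<^sup>2)"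
    unfolding set_borel_measurable_def by (intro meas1) measurable
  show "AE x in \<mu>1. x \<in> {z. 0 < norm z} \<longrightarrow> norm ((norm (j1 P x - j1 Q x))\<^sup>2)
      \<le> norm (2*(norm (j1 P x))\<^sup>2 + 2*(norm (j1 Q x))\<^sup>2)"
    using norm_diff_sq by (auto intro!: AE_I2)
qed

lemma intb1:
  fixes f :: "'z \<Rightarrow> real"
  assumes "S \<in> sets borel" "emeasure \<mu>1 S < \<infinity>" "f \<in> borel_measurable borel" "\<And>z. \<bar>f z\<bar> \<le> B"
  shows "set_integrable \<mu>1 S f"
  unfolding set_integrable_def
  by (rule integrableI_bounded_set_indicator[where B=B]) (use assms in \<open>auto intro: meas1 sets1\<close>)

lemma intb2:
  fixes f :: "'z \<Rightarrow> real"
  assumes "S \<in> sets borel" "emeasure \<mu>2 S < \<infinity>" "f \<in> borel_measurable borel" "\<And>z. \<bar>f z\<bar> \<le> B"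
  shows "set_integrable \<mu>2 S f"
  unfolding set_integrable_def
  by (rule integrableI_bounded_set_indicator[where B=B]) (use assms in \<open>auto intro: meas2 sets2\<close>)

lemma int_two:
  fixes w :: "'n \<Rightarrow> real"
  assumes wm: "w \<in> borel_measurable borel" and wb: "\<And>x. \<bar>w x\<bar> \<le> K"
  shows "set_integrable \<mu>2 {z. 0 < norm z} (\<lambda>z. w (X + j2 P z) - w X)"
proof (rule intb2[where B="2*K"])
  note wm[measurable]
  show "(\<lambda>z. w (X + j2 P z) - w X) \<in> borel_measurable borel" by measurable
  show "\<bar>w (X + j2 P z) - w X\<bar> \<le> 2 * K" for z using wb[of X] wb[of "X + j2 P z"] by linarith
qed (use fin2 in auto)

lemma int_big:
  fixes w :: "'n \<Rightarrow> real"
  assumes d: "\<delta> > 0" and wm: "w \<in> borel_measurable borel" and wb: "\<And>x. \<bar>w x\<bar> \<le> K"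
  shows "set_integrable \<mu>1 {z. \<delta> \<le> norm z} (\<lambda>z. w (X + j1 P z) - w X - j1 P z \<bullet> P)"
proof -
  note wm[measurable]
  have G: "{z::'z. \<delta> \<le> norm z} \<subseteq> {z. 0 < norm z}" using d by auto
  have i1: "set_integrable \<mu>1 {z. \<delta> \<le> norm z} (\<lambda>z. w (X + j1 P z) - w X)"
  proof (rule intb1[where B="2*K"])
    show "(\<lambda>z. w (X + j1 P z) - w X) \<in> borel_measurable borel" by measurable
    show "\<bar>w (X + j1 P z) - w X\<bar> \<le> 2 * K" for z using wb[of X] wb[of "X + j1 P z"] by linarith
  qed (use fin1[OF d] in auto)
  have one: "set_integrable \<mu>1 {z. \<delta> \<le> norm z} (\<lambda>z. 1::real)"
    by (rule intb1[where B=1]) (use fin1[OF d] in auto)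
  have sq: "set_integrable \<mu>1 {z. \<delta> \<le> norm z} (\<lambda>z. (norm (j1 P z))\<^sup>2)"
    by (rule set_integrable_subset[OF sqint1 _ G]) (intro sets1, measurable)
  have i2: "set_integrable \<mu>1 {z. \<delta> \<le> norm z} (\<lambda>z. j1 P z \<bullet> P)"
  proof (rule set_integrable_bound[where f="\<lambda>z. norm P * (1 + (norm (j1 P z))\<^sup>2)"])
    show "set_integrable \<mu>1 {z. \<delta> \<le> norm z} (\<lambda>z. norm P * (1 + (norm (j1 P z))\<^sup>2))"
      using one sq by (intro set_integrable_mult_right set_integral_add) auto
    show "set_borel_measurable \<mu>1 {z. \<delta> \<le> norm z} (\<lambda>z. j1 P z \<bullet> P)"
      unfolding set_borel_measurable_def by (intro meas1) measurable
    have "norm (j1 P x \<bullet> P) \<le> norm (norm P * (1 + (norm (j1 P x))\<^sup>2))" for x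
    proof -
      have "norm (j1 P x \<bullet> P) \<le> norm (j1 P x) * norm P" by (simp add: Cauchy_Schwarz_ineq2)
      also have "\<dots> \<le> (1 + (norm (j1 P x))\<^sup>2) * norm P"
      proof (intro mult_right_mono)
        show "norm (j1 P x) \<le> 1 + (norm (j1 P x))\<^sup>2" by (rule le1sq)
      qed simp
      finally show ?thesis by (simp add: mult.commute)
    qed
    then show "AE x in \<mu>1. x \<in> {z. \<delta> \<le> norm z} \<longrightarrow> norm (j1 P x \<bullet> P) \<le> norm (norm P * (1 + (norm (j1 P x))\<^sup>2))"
      by auto
  qed
  show ?thesis using set_integral_diff(1)[OF i1 i2] by simp
qed

end

lemma set_integral_mono_subset:
  fixes f :: "'a \<Rightarrow> real"
  assumes "set_integrable M A f" "B \<in> sets M" "B \<subseteq> A" "\<And>x. x \<in> A \<Longrightarrow> 0 \<le> f x"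
  shows "(LINT x:B|M. f x) \<le> (LINT x:A|M. f x)"
proof -
  have iB: "set_integrable M B f" by (rule set_integrable_subset[OF assms(1-3)])
  show ?thesis
    unfolding set_lebesgue_integral_def
  proof (rule integral_mono)
    show "integrable M (\<lambda>x. indicator B x *\<^sub>R f x)" using iB unfolding set_integrable_def .
    show "integrable M (\<lambda>x. indicator A x *\<^sub>R f x)" using assms(1) unfolding set_integrable_def .
    show "indicator B x *\<^sub>R f x \<le> indicator A x *\<^sub>R f x" for x
      using assms(3) assms(4)[of x] by (auto simp: indicator_def)
  qed
qed

context nl begin

lemma mx_H:
  fixes u v :: "'n \<Rightarrow> real"
  assumes mx: "\<And>x y. u x - v y - \<kappa>*(norm(x-y))\<^sup>2 - \<beta>*((norm x)\<^sup>2 + (norm y)\<^sup>2)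
                 \<le> u X - v Y - \<kappa>*(norm(X-Y))\<^sup>2 - \<beta>*((norm X)\<^sup>2 + (norm Y)\<^sup>2)"
  shows "u (X + a) - v (Y + b) - (u X - v Y) \<le>
     \<kappa>*((norm (X + a - (Y + b)))\<^sup>2 - (norm (X - Y))\<^sup>2) + \<beta>*((norm (X + a))\<^sup>2 + (norm (Y + b))\<^sup>2 - (norm X)\<^sup>2 - (norm Y)\<^sup>2)"
  using mx[of "X + a" "Y + b"] unfolding right_diff_distrib distrib_left by linarith

lemma step:
  fixes u v :: "'n \<Rightarrow> real" and X Y p q :: 'n
  assumes um: "u \<in> borel_measurable borel" and vm: "v \<in> borel_measurable borel"
   and Ku: "\<And>x. \<bar>u x\<bar> \<le> K0" and Kv: "\<And>x. \<bar>v x\<bar> \<le> K0"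
   and d: "\<delta> > 0" and kb: "\<kappa> \<ge> 0" "\<beta> \<ge> 0"
   and mx: "\<And>x y. u x - v y - \<kappa>*(norm(x-y))\<^sup>2 - \<beta>*((norm x)\<^sup>2 + (norm y)\<^sup>2)
                 \<le> u X - v Y - \<kappa>*(norm(X-Y))\<^sup>2 - \<beta>*((norm X)\<^sup>2 + (norm Y)\<^sup>2)"
   and p: "p = (2*\<kappa>) *\<^sub>R (X - Y) + (2*\<beta>) *\<^sub>R X"
   and q: "q = (2*(-\<kappa>)) *\<^sub>R (Y - X) + (2*(-\<beta>)) *\<^sub>R Y"
  shows "L_small \<mu>1 j1 \<delta> (\<lambda>x. \<kappa>*(norm (x - Y))\<^sup>2 + \<beta>*(norm x)\<^sup>2) p X + L_big \<mu>1 j1 \<delta> u p X + L_two \<mu>2 j2 u p X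
     \<le> L_small \<mu>1 j1 \<delta> (\<lambda>y. (-\<kappa>)*(norm (y - X))\<^sup>2 + (-\<beta>)*(norm y)\<^sup>2) q Y + L_big \<mu>1 j1 \<delta> v q Y + L_two \<mu>2 j2 v q Y
       + (\<kappa>+\<beta>) * ((LINT z:{z. 0 < norm z \<and> norm z < \<delta>}|\<mu>1. (norm (j1 p z))\<^sup>2)
                 + (LINT z:{z. 0 < norm z \<and> norm z < \<delta>}|\<mu>1. (norm (j1 q z))\<^sup>2))
       + (LINT z:{z. 0 < norm z}|\<mu>1. \<kappa>*(norm (j1 p z - j1 q z))\<^sup>2 + \<beta>*((norm (j1 p z))\<^sup>2 + (norm (j1 q z))\<^sup>2))
       + (LINT z:{z. 0 < norm z}|\<mu>2. min (4*K0) (max (\<kappa>*((norm (X + j2 p z - (Y + j2 q z)))\<^sup>2 - (norm (X - Y))\<^sup>2)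
             + \<beta>*((norm (X + j2 p z))\<^sup>2 + (norm (Y + j2 q z))\<^sup>2 - (norm X)\<^sup>2 - (norm Y)\<^sup>2)) 0))"
    (is "?l1 \<le> ?l2 + ?Es + ?Eb + ?Et")
proof -
  note um[measurable] vm[measurable]
  define Sm where "Sm = {z::'z. 0 < norm z \<and> norm z < \<delta>}"
  define G where "G = {z::'z. \<delta> \<le> norm z}"
  define Pos where "Pos = {z::'z. 0 < norm z}"
  have GP: "G \<subseteq> Pos" using d by (auto simp: G_def Pos_def)
  have K0: "0 \<le> K0" using Ku[of X] by linarith
  have h1: "L_small \<mu>1 j1 \<delta> (\<lambda>x. \<kappa>*(norm (x - Y))\<^sup>2 + \<beta>*(norm x)\<^sup>2) p X
      = (\<kappa>+\<beta>) * (LINT z:Sm|\<mu>1. (norm (j1 p z))\<^sup>2)"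
    unfolding p by (rule Lsmall_quad) (simp add: Sm_def)
  have h2: "L_small \<mu>1 j1 \<delta> (\<lambda>y. (-\<kappa>)*(norm (y - X))\<^sup>2 + (-\<beta>)*(norm y)\<^sup>2) q Y
      = (-\<kappa> + -\<beta>) * (LINT z:Sm|\<mu>1. (norm (j1 q z))\<^sup>2)"
    unfolding q by (rule Lsmall_quad) (simp add: Sm_def)
  define E where "E = (\<lambda>z. \<kappa>*(norm (j1 p z - j1 q z))\<^sup>2 + \<beta>*((norm (j1 p z))\<^sup>2 + (norm (j1 q z))\<^sup>2))"
  have Eint: "set_integrable \<mu>1 Pos E"
    unfolding E_def Pos_def using sqint_diff[of p q] sqint1[of p] sqint1[of q]
    by (intro set_integral_add set_integrable_mult_right) auto
  have h3: "L_big \<mu>1 j1 \<delta> u p X - L_big \<mu>1 j1 \<delta> v q Y \<le> (LINT z:Pos|\<mu>1. E z)"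
  proof -
    have iu: "set_integrable \<mu>1 G (\<lambda>z. u (X + j1 p z) - u X - j1 p z \<bullet> p)"
      unfolding G_def by (rule int_big[OF d um Ku])
    have iv: "set_integrable \<mu>1 G (\<lambda>z. v (Y + j1 q z) - v Y - j1 q z \<bullet> q)"
      unfolding G_def by (rule int_big[OF d vm Kv])
    have "L_big \<mu>1 j1 \<delta> u p X - L_big \<mu>1 j1 \<delta> v q Y
       = (LINT z:G|\<mu>1. (u (X + j1 p z) - u X - j1 p z \<bullet> p) - (v (Y + j1 q z) - v Y - j1 q z \<bullet> q))"
      unfolding L_big_def G_def[symmetric] by (rule set_integral_diff(2)[OF iu iv, symmetric])
    also have "\<dots> \<le> (LINT z:G|\<mu>1. E z)"
    proof (rule set_integral_mono)
      show "set_integrable \<mu>1 G (\<lambda>z. (u (X + j1 p z) - u X - j1 p z \<bullet> p) - (v (Y + j1 q z) - v Y - j1 q z \<bullet> q))"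
        by (rule set_integral_diff(1)[OF iu iv])
      show "set_integrable \<mu>1 G E"
        by (rule set_integrable_subset[OF Eint _ GP]) (unfold G_def, intro sets1, measurable)
      fix z
      have A: "u (X + j1 p z) - v (Y + j1 q z) - (u X - v Y) \<le>
         \<kappa>*((norm (X + j1 p z - (Y + j1 q z)))\<^sup>2 - (norm (X - Y))\<^sup>2) + \<beta>*((norm (X + j1 p z))\<^sup>2 + (norm (Y + j1 q z))\<^sup>2 - (norm X)\<^sup>2 - (norm Y)\<^sup>2)"
        by (rule mx_H[OF mx])
      have B: "\<kappa>*((norm (X + j1 p z - (Y + j1 q z)))\<^sup>2 - (norm (X - Y))\<^sup>2) + \<beta>*((norm (X + j1 p z))\<^sup>2 + (norm (Y + j1 q z))\<^sup>2 - (norm X)\<^sup>2 - (norm Y)\<^sup>2)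
         - j1 p z \<bullet> p + j1 q z \<bullet> q = E z"
        unfolding p q E_def by (rule alg_id)
      show "(u (X + j1 p z) - u X - j1 p z \<bullet> p) - (v (Y + j1 q z) - v Y - j1 q z \<bullet> q) \<le> E z"
        using A B by linarith
    qed
    also have "\<dots> \<le> (LINT z:Pos|\<mu>1. E z)"
    proof (rule set_integral_mono_subset[OF Eint _ GP])
      show "G \<in> sets \<mu>1" unfolding G_def by (intro sets1) measurable
      show "0 \<le> E x" for x unfolding E_def using kb by simp
    qed
    finally show ?thesis .
  qed
  define T where "T = (\<lambda>z. min (4*K0) (max (\<kappa>*((norm (X + j2 p z - (Y + j2 q z)))\<^sup>2 - (norm (X - Y))\<^sup>2)
             + \<beta>*((norm (X + j2 p z))\<^sup>2 + (norm (Y + j2 q z))\<^sup>2 - (norm X)\<^sup>2 - (norm Y)\<^sup>2)) 0))"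
  have h4: "L_two \<mu>2 j2 u p X - L_two \<mu>2 j2 v q Y \<le> (LINT z:Pos|\<mu>2. T z)"
  proof -
    have iu: "set_integrable \<mu>2 Pos (\<lambda>z. u (X + j2 p z) - u X)"
      unfolding Pos_def by (rule int_two[OF um Ku])
    have iv: "set_integrable \<mu>2 Pos (\<lambda>z. v (Y + j2 q z) - v Y)"
      unfolding Pos_def by (rule int_two[OF vm Kv])
    have "L_two \<mu>2 j2 u p X - L_two \<mu>2 j2 v q Y
       = (LINT z:Pos|\<mu>2. (u (X + j2 p z) - u X) - (v (Y + j2 q z) - v Y))"
      unfolding L_two_def Pos_def[symmetric] by (rule set_integral_diff(2)[OF iu iv, symmetric])
    also have "\<dots> \<le> (LINT z:Pos|\<mu>2. T z)"
    proof (rule set_integral_mono)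
      show "set_integrable \<mu>2 Pos (\<lambda>z. (u (X + j2 p z) - u X) - (v (Y + j2 q z) - v Y))"
        by (rule set_integral_diff(1)[OF iu iv])
      show "set_integrable \<mu>2 Pos T"
      proof (rule intb2[where B="4*K0"])
        show "T \<in> borel_measurable borel" unfolding T_def by measurable
        show "\<bar>T z\<bar> \<le> 4 * K0" for z unfolding T_def using K0 by auto
      qed (use fin2 in \<open>auto simp: Pos_def\<close>)
      fix z
      have A: "u (X + j2 p z) - v (Y + j2 q z) - (u X - v Y) \<le>
         \<kappa>*((norm (X + j2 p z - (Y + j2 q z)))\<^sup>2 - (norm (X - Y))\<^sup>2) + \<beta>*((norm (X + j2 p z))\<^sup>2 + (norm (Y + j2 q z))\<^sup>2 - (norm X)\<^sup>2 - (norm Y)\<^sup>2)"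
        by (rule mx_H[OF mx])
      have B: "u (X + j2 p z) - v (Y + j2 q z) - (u X - v Y) \<le> 4*K0"
        using Ku[of X] Ku[of "X + j2 p z"] Kv[of Y] Kv[of "Y + j2 q z"] by linarith
      show "(u (X + j2 p z) - u X) - (v (Y + j2 q z) - v Y) \<le> T z"
        unfolding T_def using A B by linarith
    qed
    finally show ?thesis .
  qed
  show ?thesis
    using h1 h2 h3 h4 unfolding Sm_def Pos_def E_def T_def by (simp add: algebra_simps)
qed

end

context nl begin

lemma Pos_split:
  assumes d: "\<delta> > 0"
  shows "(LINT z:{z. 0 < norm z \<and> norm z < \<delta>}|\<mu>1. (norm (j1 p z))\<^sup>2) + (LINT z:{z. \<delta> \<le> norm z}|\<mu>1. (norm (j1 p z))\<^sup>2)
     = (LINT z:{z. 0 < norm z}|\<mu>1. (norm (j1 p z))\<^sup>2)"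
proof -
  have U: "{z::'z. 0 < norm z} = {z. 0 < norm z \<and> norm z < \<delta>} \<union> {z. \<delta> \<le> norm z}" using d by auto
  have i1: "set_integrable \<mu>1 {z. 0 < norm z \<and> norm z < \<delta>} (\<lambda>z. (norm (j1 p z))\<^sup>2)"
    by (rule set_integrable_subset[OF sqint1]) (auto intro!: sets1)
  have i2: "set_integrable \<mu>1 {z. \<delta> \<le> norm z} (\<lambda>z. (norm (j1 p z))\<^sup>2)"
    by (rule set_integrable_subset[OF sqint1]) (use d in \<open>auto intro!: sets1\<close>)
  show ?thesis unfolding U by (rule set_integral_Un[symmetric]) (use i1 i2 in auto)
qed

lemma two_bound:
  fixes w :: "'n \<Rightarrow> real"
  assumes wm: "w \<in> borel_measurable borel" and wb: "\<And>x. \<bar>w x\<bar> \<le> K0"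
  shows "\<bar>L_two \<mu>2 j2 w P X\<bar> \<le> 2*K0 * measure \<mu>2 {z. 0 < norm z}"
proof -
  have i: "set_integrable \<mu>2 {z. 0 < norm z} (\<lambda>z. w (X + j2 P z) - w X)" by (rule int_two[OF wm wb])
  have c: "set_integrable \<mu>2 {z. 0 < norm z} (\<lambda>z. 2*K0)"
    by (rule intb2[where B="\<bar>2*K0\<bar>"]) (use fin2 in auto)
  have "\<bar>L_two \<mu>2 j2 w P X\<bar> \<le> (LINT z:{z. 0 < norm z}|\<mu>2. \<bar>w (X + j2 P z) - w X\<bar>)"
    unfolding L_two_def set_lebesgue_integral_def
    using integral_abs_bound[of \<mu>2 "\<lambda>z. indicator {z. 0 < norm z} z *\<^sub>R (w (X + j2 P z) - w X)"]
    by (simp add: abs_mult)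
  also have "\<dots> \<le> (LINT z:{z. 0 < norm z}|\<mu>2. 2*K0)"
  proof (rule set_integral_mono[OF set_integrable_abs[OF i] c])
    show "\<bar>w (X + j2 P z) - w X\<bar> \<le> 2*K0" for z using wb[of X] wb[of "X + j2 P z"] by linarith
  qed
  also have "\<dots> = 2*K0 * measure \<mu>2 {z. 0 < norm z}"
    by (subst set_integral_const) (use fin2 in \<open>auto intro!: sets2\<close>)
  finally show ?thesis .
qed

lemma step_up:
  fixes u :: "'n \<Rightarrow> real" and X Y p :: 'n
  assumes um: "u \<in> borel_measurable borel" and Ku: "\<And>x. \<bar>u x\<bar> \<le> K0"
   and d: "\<delta> > 0"
   and mx: "\<And>x. u x - \<kappa>*(norm(x-Y))\<^sup>2 - \<beta>*(norm x)\<^sup>2 \<le> u X - \<kappa>*(norm(X-Y))\<^sup>2 - \<beta>*(norm X)\<^sup>2"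
   and p: "p = (2*\<kappa>) *\<^sub>R (X - Y) + (2*\<beta>) *\<^sub>R X"
  shows "L_small \<mu>1 j1 \<delta> (\<lambda>x. \<kappa>*(norm (x - Y))\<^sup>2 + \<beta>*(norm x)\<^sup>2) p X + L_big \<mu>1 j1 \<delta> u p X + L_two \<mu>2 j2 u p X
     \<le> (\<kappa>+\<beta>) * (LINT z:{z. 0 < norm z}|\<mu>1. (norm (j1 p z))\<^sup>2) + 2*K0 * measure \<mu>2 {z. 0 < norm z}"
proof -
  note um[measurable]
  have h1: "L_small \<mu>1 j1 \<delta> (\<lambda>x. \<kappa>*(norm (x - Y))\<^sup>2 + \<beta>*(norm x)\<^sup>2) p X
      = (\<kappa>+\<beta>) * (LINT z:{z. 0 < norm z \<and> norm z < \<delta>}|\<mu>1. (norm (j1 p z))\<^sup>2)"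
    unfolding p by (rule Lsmall_quad) simp
  have hb: "L_big \<mu>1 j1 \<delta> u p X \<le> (LINT z:{z. \<delta> \<le> norm z}|\<mu>1. (\<kappa>+\<beta>) * (norm (j1 p z))\<^sup>2)"
    unfolding L_big_def
  proof (rule set_integral_mono)
    show "set_integrable \<mu>1 {z. \<delta> \<le> norm z} (\<lambda>z. u (X + j1 p z) - u X - j1 p z \<bullet> p)"
      by (rule int_big[OF d um Ku])
    show "set_integrable \<mu>1 {z. \<delta> \<le> norm z} (\<lambda>z. (\<kappa>+\<beta>) * (norm (j1 p z))\<^sup>2)"
      by (intro set_integrable_mult_right set_integrable_subset[OF sqint1]) (use d in \<open>auto intro!: sets1\<close>)
    fix z
    have A: "u (X + j1 p z) - u X \<le> (\<kappa>*(norm (X + j1 p z - Y))\<^sup>2 + \<beta>*(norm (X + j1 p z))\<^sup>2)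
        - (\<kappa>*(norm (X - Y))\<^sup>2 + \<beta>*(norm X)\<^sup>2)"
      using mx[of "X + j1 p z"] by linarith
    have B: "(\<kappa>*(norm (X + j1 p z - Y))\<^sup>2 + \<beta>*(norm (X + j1 p z))\<^sup>2) - (\<kappa>*(norm (X - Y))\<^sup>2 + \<beta>*(norm X)\<^sup>2)
        - j1 p z \<bullet> p = (\<kappa>+\<beta>) * (norm (j1 p z))\<^sup>2"
      unfolding p by (rule quad_id)
    show "u (X + j1 p z) - u X - j1 p z \<bullet> p \<le> (\<kappa>+\<beta>) * (norm (j1 p z))\<^sup>2" using A B by linarith
  qed
  have h2: "L_two \<mu>2 j2 u p X \<le> 2*K0 * measure \<mu>2 {z. 0 < norm z}"
    using two_bound[OF um Ku, of p X] by linarith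
  have hb': "L_big \<mu>1 j1 \<delta> u p X \<le> (\<kappa>+\<beta>) * (LINT z:{z. \<delta> \<le> norm z}|\<mu>1. (norm (j1 p z))\<^sup>2)"
    using hb by (simp only: set_integral_mult_right)
  have e: "(\<kappa>+\<beta>) * (LINT z:{z. 0 < norm z \<and> norm z < \<delta>}|\<mu>1. (norm (j1 p z))\<^sup>2)
      + (\<kappa>+\<beta>) * (LINT z:{z. \<delta> \<le> norm z}|\<mu>1. (norm (j1 p z))\<^sup>2)
      = (\<kappa>+\<beta>) * (LINT z:{z. 0 < norm z}|\<mu>1. (norm (j1 p z))\<^sup>2)"
    by (subst distrib_left[symmetric]) (simp only: Pos_split[OF d])
  show ?thesis using h1 hb' h2 e by linarith
qed

lemma step_low:
  fixes v :: "'n \<Rightarrow> real" and X Y q :: 'n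
  assumes vm: "v \<in> borel_measurable borel" and Kv: "\<And>x. \<bar>v x\<bar> \<le> K0"
   and d: "\<delta> > 0"
   and mx: "\<And>y. - v y - \<kappa>*(norm(X-y))\<^sup>2 - \<beta>*(norm y)\<^sup>2 \<le> - v Y - \<kappa>*(norm(X-Y))\<^sup>2 - \<beta>*(norm Y)\<^sup>2"
   and q: "q = (2*(-\<kappa>)) *\<^sub>R (Y - X) + (2*(-\<beta>)) *\<^sub>R Y"
  shows "L_small \<mu>1 j1 \<delta> (\<lambda>y. (-\<kappa>)*(norm (y - X))\<^sup>2 + (-\<beta>)*(norm y)\<^sup>2) q Y + L_big \<mu>1 j1 \<delta> v q Y + L_two \<mu>2 j2 v q Y
     \<ge> - ((\<kappa>+\<beta>) * (LINT z:{z. 0 < norm z}|\<mu>1. (norm (j1 q z))\<^sup>2)) - 2*K0 * measure \<mu>2 {z. 0 < norm z}"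
proof -
  note vm[measurable]
  have h1: "L_small \<mu>1 j1 \<delta> (\<lambda>y. (-\<kappa>)*(norm (y - X))\<^sup>2 + (-\<beta>)*(norm y)\<^sup>2) q Y
      = (-\<kappa> + -\<beta>) * (LINT z:{z. 0 < norm z \<and> norm z < \<delta>}|\<mu>1. (norm (j1 q z))\<^sup>2)"
    unfolding q by (rule Lsmall_quad) simp
  have hb: "(LINT z:{z. \<delta> \<le> norm z}|\<mu>1. (-\<kappa> + -\<beta>) * (norm (j1 q z))\<^sup>2) \<le> L_big \<mu>1 j1 \<delta> v q Y"
    unfolding L_big_def
  proof (rule set_integral_mono)
    show "set_integrable \<mu>1 {z. \<delta> \<le> norm z} (\<lambda>z. v (Y + j1 q z) - v Y - j1 q z \<bullet> q)"
      by (rule int_big[OF d vm Kv])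
    show "set_integrable \<mu>1 {z. \<delta> \<le> norm z} (\<lambda>z. (-\<kappa> + -\<beta>) * (norm (j1 q z))\<^sup>2)"
      by (intro set_integrable_mult_right set_integrable_subset[OF sqint1]) (use d in \<open>auto intro!: sets1\<close>)
    fix z
    have nm: "norm (X - (Y + j1 q z)) = norm (Y + j1 q z - X)" "norm (X - Y) = norm (Y - X)"
      by (simp_all add: norm_minus_commute)
    have A: "((-\<kappa>)*(norm (Y + j1 q z - X))\<^sup>2 + (-\<beta>)*(norm (Y + j1 q z))\<^sup>2)
        - ((-\<kappa>)*(norm (Y - X))\<^sup>2 + (-\<beta>)*(norm Y)\<^sup>2) \<le> v (Y + j1 q z) - v Y"
      using mx[of "Y + j1 q z"] nm by simp
    have B: "((-\<kappa>)*(norm (Y + j1 q z - X))\<^sup>2 + (-\<beta>)*(norm (Y + j1 q z))\<^sup>2) - ((-\<kappa>)*(norm (Y - X))\<^sup>2 + (-\<beta>)*(norm Y)\<^sup>2)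
        - j1 q z \<bullet> q = (-\<kappa> + -\<beta>) * (norm (j1 q z))\<^sup>2"
      unfolding q by (rule quad_id)
    show "(-\<kappa> + -\<beta>) * (norm (j1 q z))\<^sup>2 \<le> v (Y + j1 q z) - v Y - j1 q z \<bullet> q" using A B by linarith
  qed
  have h2: "- (2*K0 * measure \<mu>2 {z. 0 < norm z}) \<le> L_two \<mu>2 j2 v q Y"
    using two_bound[OF vm Kv, of q Y] by linarith
  have hb': "(-\<kappa> + -\<beta>) * (LINT z:{z. \<delta> \<le> norm z}|\<mu>1. (norm (j1 q z))\<^sup>2) \<le> L_big \<mu>1 j1 \<delta> v q Y"
    using hb by (simp only: set_integral_mult_right)
  have e: "(-\<kappa> + -\<beta>) * (LINT z:{z. 0 < norm z \<and> norm z < \<delta>}|\<mu>1. (norm (j1 q z))\<^sup>2)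
      + (-\<kappa> + -\<beta>) * (LINT z:{z. \<delta> \<le> norm z}|\<mu>1. (norm (j1 q z))\<^sup>2)
      = (-\<kappa> + -\<beta>) * (LINT z:{z. 0 < norm z}|\<mu>1. (norm (j1 q z))\<^sup>2)"
    by (subst distrib_left[symmetric]) (simp only: Pos_split[OF d])
  have e2: "(-\<kappa> + -\<beta>) * (LINT z:{z. 0 < norm z}|\<mu>1. (norm (j1 q z))\<^sup>2)
     = - ((\<kappa>+\<beta>) * (LINT z:{z. 0 < norm z}|\<mu>1. (norm (j1 q z))\<^sup>2))" by (simp only: minus_add_distrib[symmetric] mult_minus_left)
  show ?thesis using h1 hb' h2 e e2 by linarith
qed

end

lemma sq_growth:
  fixes x y :: "'a::real_inner"
  shows "(norm (x + y))\<^sup>2 - (norm x)\<^sup>2 \<le> 2 * norm x * norm y + (norm y)\<^sup>2"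
proof -
  have "(norm (x + y))\<^sup>2 = (norm x)\<^sup>2 + 2 * (x \<bullet> y) + (norm y)\<^sup>2"
    by (simp add: power2_norm_eq_inner inner_simps inner_commute)
  moreover have "x \<bullet> y \<le> norm x * norm y" by (rule norm_cauchy_schwarz)
  ultimately show ?thesis by linarith
qed

context nl begin

lemma small_lim:
  assumes e: "e > 0"
  shows "\<exists>\<delta>>0. (LINT z:{z. 0 < norm z \<and> norm z < \<delta>}|\<mu>1. (norm (j1 P z))\<^sup>2) < e"
proof -
  define s where "s = (\<lambda>n z. indicator {z::'z. 0 < norm z \<and> norm z < inverse (real (Suc n))} z *\<^sub>R (norm (j1 P z))\<^sup>2)"
  have w: "integrable \<mu>1 (\<lambda>z. indicator {z. 0 < norm z} z *\<^sub>R (norm (j1 P z))\<^sup>2)"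
    using sqint1[of P] unfolding set_integrable_def .
  have lim: "(\<lambda>n. integral\<^sup>L \<mu>1 (s n)) \<longlonglongrightarrow> integral\<^sup>L \<mu>1 (\<lambda>z. 0)"
  proof (rule integral_dominated_convergence[OF _ _ w])
    show "(\<lambda>z. 0::real) \<in> borel_measurable \<mu>1" by simp
    show "s n \<in> borel_measurable \<mu>1" for n unfolding s_def by (intro meas1) measurable
    show "AE z in \<mu>1. (\<lambda>n. s n z) \<longlonglongrightarrow> 0"
    proof (rule AE_I2)
      fix z :: 'z
      show "(\<lambda>n. s n z) \<longlonglongrightarrow> 0"
      proof (cases "z = 0")
        case True then show ?thesis by (simp add: s_def)
      next
        case False
        then obtain N where N: "inverse (real (Suc N)) < norm z" using reals_Archimedean[of "norm z"] by auto
        have "eventually (\<lambda>n. s n z = 0) sequentially"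
          unfolding eventually_sequentially
        proof (intro exI allI impI)
          fix n assume "N \<le> n"
          then have "inverse (real (Suc n)) \<le> inverse (real (Suc N))"
            by (intro le_imp_inverse_le) auto
          then have "\<not> norm z < inverse (real (Suc n))" using N by linarith
          then show "s n z = 0" by (simp add: s_def indicator_def)
        qed
        then show ?thesis by (rule tendsto_eventually)
      qed
    qed
    show "AE z in \<mu>1. norm (s n z) \<le> indicator {z. 0 < norm z} z *\<^sub>R (norm (j1 P z))\<^sup>2" for n
      by (rule AE_I2) (auto simp: s_def indicator_def)
  qed
  then have "eventually (\<lambda>n. integral\<^sup>L \<mu>1 (s n) < e) sequentially"
    using e by (auto dest: order_tendstoD(2))
  then obtain N where "\<forall>n\<ge>N. integral\<^sup>L \<mu>1 (s n) < e" unfolding eventually_sequentially by auto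
  then have "integral\<^sup>L \<mu>1 (s N) < e" by simp
  then show ?thesis
    by (intro exI[of _ "inverse (real (Suc N))"]) (auto simp: s_def set_lebesgue_integral_def)
qed

lemma Eb_bound:
  assumes kb: "\<kappa> \<ge> 0" "\<beta> \<ge> 0"
    and C: "\<forall>p. norm p < r \<longrightarrow> (\<integral>\<^sup>+ z \<in> {z. 0 < norm z}. ennreal ((norm (j1 p z))\<^sup>2) \<partial>\<mu>1) \<le> ennreal C"
    and om: "\<forall>p q. norm p < r \<and> norm q < r \<longrightarrow>
        (\<integral>\<^sup>+ z \<in> {z. 0 < norm z}. ennreal ((norm (j1 p z - j1 q z))\<^sup>2) \<partial>\<mu>1) \<le> ennreal (\<omega> (norm (p - q)))"
    and om0: "\<forall>s\<ge>0. \<omega> s \<ge> 0"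
    and PQ: "norm P < r" "norm Q < r"
  shows "(LINT z:{z. 0 < norm z}|\<mu>1. \<kappa>*(norm (j1 P z - j1 Q z))\<^sup>2 + \<beta>*((norm (j1 P z))\<^sup>2 + (norm (j1 Q z))\<^sup>2))
     \<le> \<kappa> * (if P = Q then 0 else \<omega> (norm (P - Q))) + \<beta> * (2 * max C 0)"
proof -
  have eq: "(LINT z:{z. 0 < norm z}|\<mu>1. \<kappa>*(norm (j1 P z - j1 Q z))\<^sup>2 + \<beta>*((norm (j1 P z))\<^sup>2 + (norm (j1 Q z))\<^sup>2))
    = \<kappa> * (LINT z:{z. 0 < norm z}|\<mu>1. (norm (j1 P z - j1 Q z))\<^sup>2)
      + \<beta> * ((LINT z:{z. 0 < norm z}|\<mu>1. (norm (j1 P z))\<^sup>2) + (LINT z:{z. 0 < norm z}|\<mu>1. (norm (j1 Q z))\<^sup>2))"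
    using sqint_diff[of P Q] sqint1[of P] sqint1[of Q]
    by (simp add: set_integral_add set_integrable_mult_right)
  have a: "(LINT z:{z. 0 < norm z}|\<mu>1. (norm (j1 P z - j1 Q z))\<^sup>2) \<le> (if P = Q then 0 else \<omega> (norm (P - Q)))"
  proof (cases "P = Q")
    case True then show ?thesis by simp
  next
    case False
    have "(LINT z:{z. 0 < norm z}|\<mu>1. (norm (j1 P z - j1 Q z))\<^sup>2) \<le> max (\<omega> (norm (P - Q))) 0"
      by (rule nn_to_int(2)) (use om PQ in \<open>auto intro!: meas1 sets1\<close>)
    moreover have "\<omega> (norm (P - Q)) \<ge> 0" using om0 by simp
    ultimately show ?thesis using False by (simp add: max_def)
  qed
  have b1: "(LINT z:{z. 0 < norm z}|\<mu>1. (norm (j1 P z))\<^sup>2) \<le> max C 0" by (rule sqint1_bound[OF C PQ(1)])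
  have b2: "(LINT z:{z. 0 < norm z}|\<mu>1. (norm (j1 Q z))\<^sup>2) \<le> max C 0" by (rule sqint1_bound[OF C PQ(2)])
  have "\<kappa> * (LINT z:{z. 0 < norm z}|\<mu>1. (norm (j1 P z - j1 Q z))\<^sup>2) \<le> \<kappa> * (if P = Q then 0 else \<omega> (norm (P - Q)))"
    by (rule mult_left_mono[OF a kb(1)])
  moreover have "\<beta> * ((LINT z:{z. 0 < norm z}|\<mu>1. (norm (j1 P z))\<^sup>2) + (LINT z:{z. 0 < norm z}|\<mu>1. (norm (j1 Q z))\<^sup>2))
     \<le> \<beta> * (2 * max C 0)"
    using b1 b2 kb by (intro mult_left_mono) auto
  ultimately show ?thesis unfolding eq by linarith
qed

end

context nl begin

lemma Et_lim:
  fixes X Y p q :: "nat \<Rightarrow> 'n" and \<beta> :: "nat \<Rightarrow> real"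
  assumes kb: "\<kappa> \<ge> 0" "\<And>n. \<beta> n \<ge> 0" and K0: "K0 \<ge> 0"
   and bl: "\<beta> \<longlonglongrightarrow> 0"
   and pR: "\<And>n. norm (p n) \<le> R" and qR: "\<And>n. norm (q n) \<le> R"
   and pq: "(\<lambda>n. norm (p n - q n)) \<longlonglongrightarrow> 0"
   and XY: "\<And>n. norm (X n - Y n) \<le> D"
   and bX: "(\<lambda>n. \<beta> n * norm (X n)) \<longlonglongrightarrow> 0" and bY: "(\<lambda>n. \<beta> n * norm (Y n)) \<longlonglongrightarrow> 0"
  shows "(\<lambda>n. LINT z:{z. 0 < norm z}|\<mu>2. min (4*K0) (max (\<kappa>*((norm (X n + j2 (p n) z - (Y n + j2 (q n) z)))\<^sup>2 - (norm (X n - Y n))\<^sup>2)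
             + \<beta> n*((norm (X n + j2 (p n) z))\<^sup>2 + (norm (Y n + j2 (q n) z))\<^sup>2 - (norm (X n))\<^sup>2 - (norm (Y n))\<^sup>2)) 0)) \<longlonglongrightarrow> 0"
proof -
  define H where "H = (\<lambda>n z. \<kappa>*((norm (X n + j2 (p n) z - (Y n + j2 (q n) z)))\<^sup>2 - (norm (X n - Y n))\<^sup>2)
             + \<beta> n*((norm (X n + j2 (p n) z))\<^sup>2 + (norm (Y n + j2 (q n) z))\<^sup>2 - (norm (X n))\<^sup>2 - (norm (Y n))\<^sup>2))"
  define s where "s = (\<lambda>n z. indicator {z::'z. 0 < norm z} z *\<^sub>R min (4*K0) (max (H n z) 0))"
  have w: "integrable \<mu>2 (\<lambda>z. indicator {z::'z. 0 < norm z} z *\<^sub>R (4*K0))"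
    using intb2[of "{z. 0 < norm z}" "\<lambda>z. 4*K0" "4*K0"] fin2 K0 unfolding set_integrable_def by auto
  have "(\<lambda>n. integral\<^sup>L \<mu>2 (s n)) \<longlonglongrightarrow> integral\<^sup>L \<mu>2 (\<lambda>z. 0)"
  proof (rule integral_dominated_convergence[OF _ _ w])
    show "(\<lambda>z. 0::real) \<in> borel_measurable \<mu>2" by simp
    show "s n \<in> borel_measurable \<mu>2" for n unfolding s_def H_def by (intro meas2) measurable
    show "AE z in \<mu>2. norm (s n z) \<le> indicator {z. 0 < norm z} z *\<^sub>R (4*K0)" for n
      by (rule AE_I2) (use K0 in \<open>auto simp: s_def indicator_def\<close>)
    have AEc: "AE z in \<mu>2. continuous_on UNIV (\<lambda>p. j2 p z)" using J1 unfolding hypJ1_def by blast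
    show "AE z in \<mu>2. (\<lambda>n. s n z) \<longlonglongrightarrow> 0"
    proof (rule AE_mp[OF AEc], rule AE_I2, rule impI)
      fix z :: 'z
      assume c: "continuous_on UNIV (\<lambda>p. j2 p z)"
      have cR: "continuous_on (cball 0 R) (\<lambda>p. j2 p z)" using c by (rule continuous_on_subset) simp
      have "bounded ((\<lambda>p. j2 p z) ` cball 0 R)"
        by (rule compact_imp_bounded[OF compact_continuous_image[OF cR compact_cball]])
      then obtain Bz where Bz: "\<forall>y\<in>(\<lambda>p. j2 p z) ` cball 0 R. norm y \<le> Bz" unfolding bounded_iff by blast
      have Bp: "norm (j2 (p n) z) \<le> Bz" for n using Bz pR[of n] by auto
      have Bq: "norm (j2 (q n) z) \<le> Bz" for n using Bz qR[of n] by auto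
      have Bz0: "0 \<le> Bz" using Bp[of 0] norm_ge_zero order_trans by blast
      have uc: "uniformly_continuous_on (cball 0 R) (\<lambda>p. j2 p z)"
        by (rule compact_uniformly_continuous[OF cR compact_cball])
      have wl: "(\<lambda>n. norm (j2 (p n) z - j2 (q n) z)) \<longlonglongrightarrow> 0"
        unfolding LIMSEQ_iff
      proof (intro allI impI)
        fix r :: real assume r: "r > 0"
        obtain d where d: "d > 0" "\<forall>x\<in>cball 0 R. \<forall>x'\<in>cball 0 R. dist x' x < d \<longrightarrow> dist (j2 x' z) (j2 x z) < r"
          using uc r unfolding uniformly_continuous_on_def by metis
        obtain no where no: "\<forall>n\<ge>no. norm (norm (p n - q n) - 0) < d"
          using pq d(1) unfolding LIMSEQ_iff by blast
        show "\<exists>no. \<forall>n\<ge>no. norm (norm (j2 (p n) z - j2 (q n) z) - 0) < r"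
        proof (intro exI allI impI)
          fix n assume "no \<le> n"
          then have "dist (p n) (q n) < d" using no by (simp add: dist_norm)
          then have "dist (j2 (p n) z) (j2 (q n) z) < r" using d(2) pR[of n] qR[of n] by auto
          then show "norm (norm (j2 (p n) z - j2 (q n) z) - 0) < r" by (simp add: dist_norm)
        qed
      qed
      define B where "B = (\<lambda>n. \<kappa>*(2*D*norm (j2 (p n) z - j2 (q n) z) + (norm (j2 (p n) z - j2 (q n) z))\<^sup>2)
          + 2*(\<beta> n * norm (X n))*Bz + \<beta> n*Bz\<^sup>2 + 2*(\<beta> n * norm (Y n))*Bz + \<beta> n*Bz\<^sup>2)"
      have Bl: "B \<longlonglongrightarrow> 0"
      proof -
        have "B \<longlonglongrightarrow> \<kappa>*(2*D*0 + 0\<^sup>2) + 2*0*Bz + 0*Bz\<^sup>2 + 2*0*Bz + 0*Bz\<^sup>2"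
          unfolding B_def by (intro tendsto_intros wl bl bX bY)
        then show ?thesis by simp
      qed
      have HB: "H n z \<le> B n" for n
      proof -
        let ?a = "j2 (p n) z" and ?b = "j2 (q n) z"
        have e1: "X n + ?a - (Y n + ?b) = (X n - Y n) + (?a - ?b)" by (simp add: algebra_simps)
        have t1: "(norm (X n + ?a - (Y n + ?b)))\<^sup>2 - (norm (X n - Y n))\<^sup>2
            \<le> 2*D*norm (?a - ?b) + (norm (?a - ?b))\<^sup>2"
        proof -
          have "(norm (X n + ?a - (Y n + ?b)))\<^sup>2 - (norm (X n - Y n))\<^sup>2
              \<le> 2 * norm (X n - Y n) * norm (?a - ?b) + (norm (?a - ?b))\<^sup>2"
            unfolding e1 by (rule sq_growth)
          moreover have "norm (X n - Y n) * norm (?a - ?b) \<le> D * norm (?a - ?b)"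
            by (rule mult_right_mono[OF XY]) simp
          ultimately show ?thesis by linarith
        qed
        have sqa: "(norm ?a)\<^sup>2 \<le> Bz\<^sup>2" by (rule power_mono[OF Bp]) simp
        have sqb: "(norm ?b)\<^sup>2 \<le> Bz\<^sup>2" by (rule power_mono[OF Bq]) simp
        have t2: "(norm (X n + ?a))\<^sup>2 - (norm (X n))\<^sup>2 \<le> 2 * norm (X n) * Bz + Bz\<^sup>2"
        proof -
          have "norm (X n) * norm ?a \<le> norm (X n) * Bz" by (rule mult_left_mono[OF Bp]) simp
          then show ?thesis using sq_growth[of "X n" ?a] sqa by linarith
        qed
        have t3: "(norm (Y n + ?b))\<^sup>2 - (norm (Y n))\<^sup>2 \<le> 2 * norm (Y n) * Bz + Bz\<^sup>2"
        proof -
          have "norm (Y n) * norm ?b \<le> norm (Y n) * Bz" by (rule mult_left_mono[OF Bq]) simp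
          then show ?thesis using sq_growth[of "Y n" ?b] sqb by linarith
        qed
        have m1: "\<kappa>*((norm (X n + ?a - (Y n + ?b)))\<^sup>2 - (norm (X n - Y n))\<^sup>2)
            \<le> \<kappa>*(2*D*norm (?a - ?b) + (norm (?a - ?b))\<^sup>2)"
          by (rule mult_left_mono[OF t1 kb(1)])
        have m2: "\<beta> n*((norm (X n + ?a))\<^sup>2 + (norm (Y n + ?b))\<^sup>2 - (norm (X n))\<^sup>2 - (norm (Y n))\<^sup>2)
            \<le> \<beta> n*((2 * norm (X n) * Bz + Bz\<^sup>2) + (2 * norm (Y n) * Bz + Bz\<^sup>2))"
          using t2 t3 by (intro mult_left_mono kb(2)) linarith
        have m3: "\<beta> n*((2 * norm (X n) * Bz + Bz\<^sup>2) + (2 * norm (Y n) * Bz + Bz\<^sup>2))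
            = 2*(\<beta> n * norm (X n))*Bz + \<beta> n*Bz\<^sup>2 + 2*(\<beta> n * norm (Y n))*Bz + \<beta> n*Bz\<^sup>2"
          by (simp add: algebra_simps)
        show ?thesis unfolding H_def B_def using m1 m2 m3 by linarith
      qed
      have mx0: "(\<lambda>n. max (H n z) 0) \<longlonglongrightarrow> 0"
      proof (rule tendsto_sandwich[of "\<lambda>n. 0" _ _ "\<lambda>n. max (B n) 0"])
        show "\<forall>\<^sub>F n in sequentially. 0 \<le> max (H n z) 0" by simp
        show "\<forall>\<^sub>F n in sequentially. max (H n z) 0 \<le> max (B n) 0" using HB by (intro always_eventually allI max.mono) auto
        show "(\<lambda>n. 0::real) \<longlonglongrightarrow> 0" by simp
        have "(\<lambda>n. max (B n) 0) \<longlonglongrightarrow> max 0 0" by (intro tendsto_intros Bl)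
        then show "(\<lambda>n. max (B n) 0) \<longlonglongrightarrow> 0" by simp
      qed
      have "(\<lambda>n. s n z) \<longlonglongrightarrow> indicator {z::'z. 0 < norm z} z *\<^sub>R min (4*K0) 0"
        unfolding s_def by (intro tendsto_intros mx0)
      then show "(\<lambda>n. s n z) \<longlonglongrightarrow> 0" using K0 by simp
    qed
  qed
  then show ?thesis unfolding s_def H_def set_lebesgue_integral_def by simp
qed

end

lemma max_exists:
  fixes u v :: "'n::euclidean_space \<Rightarrow> real"
  assumes us: "usc u" and vs: "lsc v" and Ku: "\<And>x. \<bar>u x\<bar> \<le> K0" and Kv: "\<And>x. \<bar>v x\<bar> \<le> K0"
    and k: "\<kappa> \<ge> 0" and b: "\<beta> > 0"
  shows "\<exists>X Y. \<forall>x y. u x - v y - \<kappa>*(norm(x-y))\<^sup>2 - \<beta>*((norm x)\<^sup>2 + (norm y)\<^sup>2)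
     \<le> u X - v Y - \<kappa>*(norm(X-Y))\<^sup>2 - \<beta>*((norm X)\<^sup>2 + (norm Y)\<^sup>2)"
proof -
  define g where "g = (\<lambda>z::'n\<times>'n. u (fst z) - v (snd z) - \<kappa>*(norm(fst z - snd z))\<^sup>2 - \<beta>*((norm (fst z))\<^sup>2 + (norm (snd z))\<^sup>2))"
  have g_usc: "open {z. g z < t}" for t
  proof -
    have o1: "open {z::'n\<times>'n. u (fst z) < s}" for s
    proof -
      have e: "{z::'n\<times>'n. u (fst z) < s} = fst -` {x. u x < s}" by auto
      show ?thesis unfolding e using us unfolding usc_def by (intro open_vimage_fst) auto
    qed
    have o2: "open {z::'n\<times>'n. - v (snd z) < s}" for s
    proof -
      have e: "{z::'n\<times>'n. - v (snd z) < s} = snd -` {x. -s < v x}" by auto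
      show ?thesis unfolding e using vs unfolding lsc_def by (intro open_vimage_snd) auto
    qed
    have o3: "open {z::'n\<times>'n. - \<kappa>*(norm(fst z - snd z))\<^sup>2 - \<beta>*((norm (fst z))\<^sup>2 + (norm (snd z))\<^sup>2) < s}" for s
      by (rule open_Collect_less) (auto intro!: continuous_intros)
    have o12: "open {z::'n\<times>'n. u (fst z) + - v (snd z) < s}" for s by (rule usc_add[OF o1 o2])
    have "open {z::'n\<times>'n. (u (fst z) + - v (snd z)) + (- \<kappa>*(norm(fst z - snd z))\<^sup>2 - \<beta>*((norm (fst z))\<^sup>2 + (norm (snd z))\<^sup>2)) < t}"
      by (rule usc_add[OF o12 o3])
    then show ?thesis unfolding g_def by (simp add: algebra_simps)
  qed
  define x0 :: "'n\<times>'n" where "x0 = (0, 0)"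
  define R where "R = (2*K0 + \<bar>g x0\<bar> + 1) / \<beta> + 1"
  have R: "g z < g x0" if "norm z > R" for z
  proof -
    obtain a c where z: "z = (a, c)" by (cases z)
    have nz: "(norm z)\<^sup>2 = (norm a)\<^sup>2 + (norm c)\<^sup>2" unfolding z norm_Pair by simp
    have K0: "0 \<le> K0" using Ku[of 0] by linarith
    have R1: "R \<ge> 1" unfolding R_def using b K0 by (simp add: field_simps)
    have "1 * norm z \<le> norm z * norm z" using that R1 by (intro mult_right_mono) auto
    then have "norm z \<le> (norm z)\<^sup>2" by (simp add: power2_eq_square)
    then have "R < (norm a)\<^sup>2 + (norm c)\<^sup>2" using that nz by linarith
    then have "\<beta> * R \<le> \<beta> * ((norm a)\<^sup>2 + (norm c)\<^sup>2)" using b by simp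
    moreover have "\<beta> * R = 2*K0 + \<bar>g x0\<bar> + 1 + \<beta>" unfolding R_def using b by (simp add: field_simps)
    moreover have "g z \<le> 2*K0 - \<beta> * ((norm a)\<^sup>2 + (norm c)\<^sup>2)"
      unfolding g_def z using Ku[of a] Kv[of c] mult_nonneg_nonneg[OF k zero_le_power2[of "norm (a - c)"]]
      by (simp add: abs_le_iff)
    ultimately show ?thesis using b by linarith
  qed
  obtain z where z: "\<forall>y. g y \<le> g z" using usc_global_max[OF g_usc R] by blast
  show ?thesis
  proof (intro exI allI)
    fix x y
    show "u x - v y - \<kappa>*(norm(x-y))\<^sup>2 - \<beta>*((norm x)\<^sup>2 + (norm y)\<^sup>2)
     \<le> u (fst z) - v (snd z) - \<kappa>*(norm(fst z - snd z))\<^sup>2 - \<beta>*((norm (fst z))\<^sup>2 + (norm (snd z))\<^sup>2)"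
      using z[rule_format, of "(x,y)"] unfolding g_def by simp
  qed
qed

lemma modulus_small:
  assumes "modulus \<omega>" "e > 0"
  shows "\<exists>s0>0. \<forall>s. 0 < s \<and> s < s0 \<longrightarrow> \<omega> s < e"
proof -
  have "(\<omega> \<longlongrightarrow> 0) (at_right 0)" using assms(1) unfolding modulus_def by blast
  then have "eventually (\<lambda>s. \<omega> s < e) (at_right 0)" using assms(2) by (auto dest: order_tendstoD(2))
  then show ?thesis unfolding eventually_at_right_field by auto
qed

lemma modulus_nonneg: "modulus \<omega> \<Longrightarrow> \<forall>s\<ge>0. \<omega> s \<ge> 0" unfolding modulus_def by blast

context nl begin

lemma sq_nonneg_int: "0 \<le> (LINT z:S|\<mu>1. (norm (j1 P z))\<^sup>2)"
  unfolding set_lebesgue_integral_def by (rule integral_nonneg_AE) (auto simp: indicator_def)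

lemma small_two:
  assumes e: "e > 0"
  shows "\<exists>\<delta>>0. (LINT z:{z. 0 < norm z \<and> norm z < \<delta>}|\<mu>1. (norm (j1 P z))\<^sup>2) < e
              \<and> (LINT z:{z. 0 < norm z \<and> norm z < \<delta>}|\<mu>1. (norm (j1 Q z))\<^sup>2) < e"
proof -
  obtain d1 where d1: "d1 > 0" "(LINT z:{z. 0 < norm z \<and> norm z < d1}|\<mu>1. (norm (j1 P z))\<^sup>2) < e"
    using small_lim[OF e] by blast
  obtain d2 where d2: "d2 > 0" "(LINT z:{z. 0 < norm z \<and> norm z < d2}|\<mu>1. (norm (j1 Q z))\<^sup>2) < e"
    using small_lim[OF e] by blast
  have mono: "(LINT z:{z. 0 < norm z \<and> norm z < min d1 d2}|\<mu>1. (norm (j1 W z))\<^sup>2)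
      \<le> (LINT z:{z. 0 < norm z \<and> norm z < d}|\<mu>1. (norm (j1 W z))\<^sup>2)" if "d = d1 \<or> d = d2" for W d
  proof (rule set_integral_mono_subset)
    show "set_integrable \<mu>1 {z. 0 < norm z \<and> norm z < d} (\<lambda>z. (norm (j1 W z))\<^sup>2)"
      by (rule set_integrable_subset[OF sqint1]) (auto intro!: sets1)
  qed (use that in \<open>auto intro!: sets1\<close>)
  show ?thesis
    using d1 d2 mono[of d1 P] mono[of d2 Q] by (intro exI[of _ "min d1 d2"]) auto
qed

end

context nl begin

lemma comparison:
  fixes F :: "real \<Rightarrow> 'n \<Rightarrow> real \<Rightarrow> real" and f u v :: "'n \<Rightarrow> real"
  assumes F1: "hypF1 F" and F2: "hypF2 F" and F3: "hypF3 F" and F4: "hypF4 f"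
   and sub: "visc_sub F f \<mu>1 \<mu>2 j1 j2 u" and sup: "visc_super F f \<mu>1 \<mu>2 j1 j2 v"
  shows "u x0 \<le> v x0"
proof (rule ccontr)
  assume "\<not> u x0 \<le> v x0"
  define m where "m = u x0 - v x0"
  have m: "m > 0" using \<open>\<not> u x0 \<le> v x0\<close> unfolding m_def by linarith
  have ub: "bounded (range u)" and us: "usc u"
    and subc: "\<And>\<delta> \<phi> D\<phi> x. \<delta> > 0 \<Longrightarrow> C2_grad \<phi> D\<phi> \<Longrightarrow> (\<forall>y. u y - \<phi> y \<le> u x - \<phi> x) \<Longrightarrow>
        F (u x) (D\<phi> x) (L_small \<mu>1 j1 \<delta> \<phi> (D\<phi> x) x + L_big \<mu>1 j1 \<delta> u (D\<phi> x) x
                          + L_two \<mu>2 j2 u (D\<phi> x) x) \<le> f x"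
    using sub unfolding visc_sub_def by blast+
  have vb: "bounded (range v)" and vs: "lsc v"
    and supc: "\<And>\<delta> \<phi> D\<phi> x. \<delta> > 0 \<Longrightarrow> C2_grad \<phi> D\<phi> \<Longrightarrow> (\<forall>y. v x - \<phi> x \<le> v y - \<phi> y) \<Longrightarrow>
        F (v x) (D\<phi> x) (L_small \<mu>1 j1 \<delta> \<phi> (D\<phi> x) x + L_big \<mu>1 j1 \<delta> v (D\<phi> x) x
                          + L_two \<mu>2 j2 v (D\<phi> x) x) \<ge> f x"
    using sup unfolding visc_super_def by blast+
  obtain a1 where a1: "\<forall>y\<in>range u. norm y \<le> a1" using ub unfolding bounded_iff by blast
  obtain a2 where a2: "\<forall>y\<in>range v. norm y \<le> a2" using vb unfolding bounded_iff by blast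
  define K0 where "K0 = max a1 a2 + 1"
  have au: "\<bar>u x\<bar> \<le> a1" for x using a1 by (metis rangeI real_norm_def)
  have av: "\<bar>v x\<bar> \<le> a2" for x using a2 by (metis rangeI real_norm_def)
  have mm: "a1 \<le> max a1 a2" "a2 \<le> max a1 a2" by simp_all
  have Ku: "\<And>x. \<bar>u x\<bar> \<le> K0" unfolding K0_def using au mm by (meson add_increasing2 order_trans zero_le_one)
  have Kv: "\<And>x. \<bar>v x\<bar> \<le> K0" unfolding K0_def using av mm by (meson add_increasing2 order_trans zero_le_one)
  have K0p: "K0 > 0" using au[of x0] mm unfolding K0_def by linarith
  have um: "u \<in> borel_measurable borel" by (rule usc_measurable[OF us])
  have vm: "v \<in> borel_measurable borel" by (rule lsc_measurable[OF vs])
  obtain \<gamma> where \<gamma>: "\<gamma> > 0" "\<And>a b p l. -K0 \<le> b \<Longrightarrow> b \<le> a \<Longrightarrow> a \<le> K0 \<Longrightarrow> F a p l - F b p l \<ge> \<gamma> * (a - b)"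
    using F2 K0p unfolding hypF2_def by meson
  define e where "e = \<gamma> * m / 8"
  have e: "e > 0" unfolding e_def using \<gamma> m by simp
  obtain d where d: "d > 0" "\<And>x y. dist y x < d \<Longrightarrow> dist (f y) (f x) < e"
    using F4 e unfolding hypF4_def uniformly_continuous_on_def by blast
  define \<kappa> where "\<kappa> = (4*K0 + 1) / d\<^sup>2"
  have \<kappa>: "\<kappa> > 0" unfolding \<kappa>_def using K0p d by simp
  define D where "D = 1 + 2*K0/\<kappa>"
  define R where "R = 2*\<kappa>*D + 2*(1 + 2*K0) + 1"
  have Rp: "R > 0" unfolding R_def D_def using \<kappa> K0p by (simp add: add_pos_nonneg)
  obtain C1 where C1: "\<forall>p. norm p < R \<longrightarrow>
        (\<integral>\<^sup>+ z \<in> {z. 0 < norm z}. ennreal ((norm (j1 p z))\<^sup>2) \<partial>\<mu>1) \<le> ennreal C1"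
    using J1 Rp unfolding hypJ1_def by blast
  obtain \<omega>j where \<omega>j: "modulus \<omega>j" "\<forall>p q. norm p < R \<and> norm q < R \<longrightarrow>
        (\<integral>\<^sup>+ z \<in> {z. 0 < norm z}. ennreal ((norm (j1 p z - j1 q z))\<^sup>2) \<partial>\<mu>1)
          \<le> ennreal (\<omega>j (norm (p - q)))"
    using J2 Rp unfolding hypJ2_def by blast
  define m2 where "m2 = measure \<mu>2 {z. 0 < norm z}"
  have m2: "m2 \<ge> 0" unfolding m2_def by simp
  define A where "A = (\<kappa>+1) * max C1 0 + 2*K0*m2"
  have A0: "A \<ge> 0" unfolding A_def using \<kappa> K0p m2 by simp
  define r where "r = R + 2*A + 3"
  have rp: "r > 0" unfolding r_def using Rp A0 by simp
  obtain \<omega>F where \<omega>F: "modulus \<omega>F" "\<And>a p q l l'. \<bar>a\<bar> \<le> K0 \<Longrightarrow> norm p \<le> r \<Longrightarrow> norm q \<le> r \<Longrightarrow> \<bar>l\<bar> \<le> r \<Longrightarrow> \<bar>l'\<bar> \<le> r \<Longrightarrow>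
        \<bar>F a p l - F a q l'\<bar> \<le> \<omega>F (norm (p - q) + \<bar>l - l'\<bar>)"
    using F3 K0p rp unfolding hypF3_def by meson
  obtain s0 where s0: "s0 > 0" "\<And>s. 0 < s \<Longrightarrow> s < s0 \<Longrightarrow> \<omega>F s < e"
    using modulus_small[OF \<omega>F(1) e] by blast
  define \<eta>0 where "\<eta>0 = min 1 s0 / 4"
  have \<eta>0: "\<eta>0 > 0" "\<eta>0 \<le> 1/4" "\<eta>0 \<le> s0/4" unfolding \<eta>0_def using s0 by auto

  define b0 where "b0 = min 1 (m / (4*(norm x0)\<^sup>2 + 1))"
  have b0: "b0 > 0" "b0 \<le> 1" unfolding b0_def using m by (auto simp: add_nonneg_pos)
  have b0x: "b0 * (norm x0)\<^sup>2 \<le> m/4"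
  proof -
    have "b0 * (norm x0)\<^sup>2 \<le> m / (4*(norm x0)\<^sup>2 + 1) * (norm x0)\<^sup>2"
      unfolding b0_def by (intro mult_right_mono) auto
    also have "\<dots> = (m/4) * ((4*(norm x0)\<^sup>2) / (4*(norm x0)\<^sup>2 + 1))"
      by (simp add: field_simps add_nonneg_pos)
    also have "\<dots> \<le> (m/4) * 1"
      using m by (intro mult_left_mono) (auto simp: divide_le_eq_1 add_nonneg_pos)
    finally show ?thesis by simp
  qed
  define \<beta> where "\<beta> = (\<lambda>n::nat. b0 * inverse (real (Suc n)))"
  have \<beta>p: "\<beta> n > 0" for n unfolding \<beta>_def using b0 by simp
  have \<beta>b0: "\<beta> n \<le> b0" for n unfolding \<beta>_def using b0
    by (intro mult_left_le) (auto simp: field_simps)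
  have \<beta>1: "\<beta> n \<le> 1" for n using \<beta>b0[of n] b0 by linarith
  have \<beta>x: "\<beta> n * (norm x0)\<^sup>2 \<le> m/4" for n using b0x \<beta>b0[of n] by (smt (verit) mult_right_mono zero_le_power2)
  have \<beta>l: "\<beta> \<longlonglongrightarrow> 0" unfolding \<beta>_def
    by (rule tendsto_mult_right_zero, rule LIMSEQ_inverse_real_of_nat)
  have "\<forall>n. \<exists>Z::'n\<times>'n. \<forall>x y. u x - v y - \<kappa>*(norm(x-y))\<^sup>2 - \<beta> n*((norm x)\<^sup>2 + (norm y)\<^sup>2)
     \<le> u (fst Z) - v (snd Z) - \<kappa>*(norm(fst Z - snd Z))\<^sup>2 - \<beta> n*((norm (fst Z))\<^sup>2 + (norm (snd Z))\<^sup>2)"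
  proof
    fix n
    obtain X Y where "\<forall>x y. u x - v y - \<kappa>*(norm(x-y))\<^sup>2 - \<beta> n*((norm x)\<^sup>2 + (norm y)\<^sup>2)
     \<le> u X - v Y - \<kappa>*(norm(X-Y))\<^sup>2 - \<beta> n*((norm X)\<^sup>2 + (norm Y)\<^sup>2)"
      using max_exists[OF us vs Ku Kv _ \<beta>p[of n], of \<kappa>] \<kappa> by auto
    then show "\<exists>Z::'n\<times>'n. \<forall>x y. u x - v y - \<kappa>*(norm(x-y))\<^sup>2 - \<beta> n*((norm x)\<^sup>2 + (norm y)\<^sup>2)
     \<le> u (fst Z) - v (snd Z) - \<kappa>*(norm(fst Z - snd Z))\<^sup>2 - \<beta> n*((norm (fst Z))\<^sup>2 + (norm (snd Z))\<^sup>2)"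
      by (intro exI[of _ "(X, Y)"]) simp
  qed
  from choice[OF this] obtain Z where Z: "\<And>n x y. u x - v y - \<kappa>*(norm(x-y))\<^sup>2 - \<beta> n*((norm x)\<^sup>2 + (norm y)\<^sup>2)
     \<le> u (fst (Z n)) - v (snd (Z n)) - \<kappa>*(norm(fst (Z n) - snd (Z n)))\<^sup>2 - \<beta> n*((norm (fst (Z n)))\<^sup>2 + (norm (snd (Z n)))\<^sup>2)"
    by blast
  define X where "X = (\<lambda>n. fst (Z n))"
  define Y where "Y = (\<lambda>n. snd (Z n))"
  have mx: "\<And>n x y. u x - v y - \<kappa>*(norm(x-y))\<^sup>2 - \<beta> n*((norm x)\<^sup>2 + (norm y)\<^sup>2)
     \<le> u (X n) - v (Y n) - \<kappa>*(norm(X n - Y n))\<^sup>2 - \<beta> n*((norm (X n))\<^sup>2 + (norm (Y n))\<^sup>2)"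
    unfolding X_def Y_def by (rule Z)
  have low: "m/2 \<le> u (X n) - v (Y n) - \<kappa>*(norm(X n - Y n))\<^sup>2 - \<beta> n*((norm (X n))\<^sup>2 + (norm (Y n))\<^sup>2)" for n
  proof -
    have "u x0 - v x0 - \<kappa>*(norm(x0-x0))\<^sup>2 - \<beta> n*((norm x0)\<^sup>2 + (norm x0)\<^sup>2) = m - 2*(\<beta> n * (norm x0)\<^sup>2)"
      by (simp add: m_def algebra_simps)
    then show ?thesis using mx[where n=n and x=x0 and y=x0] \<beta>x[of n] by linarith
  qed
  have nn1: "0 \<le> \<kappa>*(norm(X n - Y n))\<^sup>2" for n using \<kappa> by simp
  have nn2: "0 \<le> \<beta> n*((norm (X n))\<^sup>2 + (norm (Y n))\<^sup>2)" for n using \<beta>p[of n] by simp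
  have uvb: "u (X n) - v (Y n) \<le> 2*K0" for n using Ku[of "X n"] Kv[of "Y n"] by (simp add: abs_le_iff)
  have gap: "m/2 \<le> u (X n) - v (Y n)" for n using low[of n] nn1[of n] nn2[of n] by linarith
  have pen: "\<kappa>*(norm(X n - Y n))\<^sup>2 + \<beta> n*((norm (X n))\<^sup>2 + (norm (Y n))\<^sup>2) \<le> 2*K0" for n
    using low[of n] uvb[of n] m by linarith
  have XYsq: "(norm(X n - Y n))\<^sup>2 \<le> 2*K0/\<kappa>" for n
    using pen[of n] nn2[of n] \<kappa> by (simp add: field_simps)
  have XYd: "norm (X n - Y n) < d" for n
  proof -
    have "2*K0/\<kappa> = 2*K0*d\<^sup>2/(4*K0+1)" unfolding \<kappa>_def using d K0p by (simp add: field_simps)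
    also have "\<dots> < d\<^sup>2"
    proof -
      have d2: "d\<^sup>2 > 0" using d by simp
      have e1: "d\<^sup>2 * (4*K0+1) = 2*K0*d\<^sup>2 + (2*K0*d\<^sup>2 + d\<^sup>2)" by (simp add: algebra_simps)
      have e2: "0 \<le> 2*K0*d\<^sup>2" using K0p by simp
      have "2*K0*d\<^sup>2 < d\<^sup>2 * (4*K0+1)" unfolding e1 using e2 d2 by linarith
      then show ?thesis using K0p by (simp add: divide_less_eq add_pos_nonneg)
    qed
    finally have "(norm(X n - Y n))\<^sup>2 < d\<^sup>2" using XYsq[of n] by linarith
    then show ?thesis using d by (simp add: power_less_imp_less_base)
  qed
  have XYD: "norm (X n - Y n) \<le> D" for n using le1sq[of "norm (X n - Y n)"] XYsq[of n] unfolding D_def by linarith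
  have bXsq: "(\<beta> n * norm (X n))\<^sup>2 \<le> 2*K0*\<beta> n" for n
  proof -
    have "\<beta> n * (norm (X n))\<^sup>2 \<le> 2*K0" using pen[of n] nn1[of n] \<beta>p[of n]
      by (smt (verit) distrib_left mult_nonneg_nonneg zero_le_power2)
    then have "\<beta> n * (\<beta> n * (norm (X n))\<^sup>2) \<le> \<beta> n * (2*K0)" using \<beta>p[of n] by (intro mult_left_mono) auto
    then show ?thesis by (simp add: power2_eq_square algebra_simps)
  qed
  have bYsq: "(\<beta> n * norm (Y n))\<^sup>2 \<le> 2*K0*\<beta> n" for n
  proof -
    have "\<beta> n * (norm (Y n))\<^sup>2 \<le> 2*K0" using pen[of n] nn1[of n] \<beta>p[of n]
      by (smt (verit) distrib_left mult_nonneg_nonneg zero_le_power2)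
    then have "\<beta> n * (\<beta> n * (norm (Y n))\<^sup>2) \<le> \<beta> n * (2*K0)" using \<beta>p[of n] by (intro mult_left_mono) auto
    then show ?thesis by (simp add: power2_eq_square algebra_simps)
  qed
  have bX1: "\<beta> n * norm (X n) \<le> 1 + 2*K0" for n
    using le1sq[of "\<beta> n * norm (X n)"] bXsq[of n] \<beta>1[of n] K0p
    by (smt (verit) mult_left_le)
  have bY1: "\<beta> n * norm (Y n) \<le> 1 + 2*K0" for n
    using le1sq[of "\<beta> n * norm (Y n)"] bYsq[of n] \<beta>1[of n] K0p
    by (smt (verit) mult_left_le)
  define p where "p = (\<lambda>n. (2*\<kappa>) *\<^sub>R (X n - Y n) + (2*\<beta> n) *\<^sub>R X n)"
  define q where "q = (\<lambda>n. (2*(-\<kappa>)) *\<^sub>R (Y n - X n) + (2*(-\<beta> n)) *\<^sub>R Y n)"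
  have pR: "norm (p n) \<le> R - 1" for n
  proof -
    have "norm (p n) \<le> norm ((2*\<kappa>) *\<^sub>R (X n - Y n)) + norm ((2*\<beta> n) *\<^sub>R X n)"
      unfolding p_def by (rule norm_triangle_ineq)
    also have "\<dots> = 2*\<kappa>*norm (X n - Y n) + 2*(\<beta> n * norm (X n))" using \<kappa> \<beta>p[of n] by simp
    also have "\<dots> \<le> 2*\<kappa>*D + 2*(1 + 2*K0)"
    proof -
      have h1: "2*\<kappa> * norm (X n - Y n) \<le> 2*\<kappa> * D" using XYD[of n] \<kappa> by (intro mult_left_mono) auto
      have h2: "2*(\<beta> n * norm (X n)) \<le> 2*(1 + 2*K0)" using bX1[of n] by simp
      show ?thesis using add_mono[OF h1 h2] by simp
    qed
    finally show ?thesis unfolding R_def by simp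
  qed
  have qR: "norm (q n) \<le> R - 1" for n
  proof -
    have "norm (q n) \<le> norm ((2*(-\<kappa>)) *\<^sub>R (Y n - X n)) + norm ((2*(-\<beta> n)) *\<^sub>R Y n)"
      unfolding q_def by (rule norm_triangle_ineq)
    also have "\<dots> = 2*\<kappa>*norm (X n - Y n) + 2*(\<beta> n * norm (Y n))" using \<kappa> \<beta>p[of n]
      by (simp add: norm_minus_commute)
    also have "\<dots> \<le> 2*\<kappa>*D + 2*(1 + 2*K0)"
    proof -
      have h1: "2*\<kappa> * norm (X n - Y n) \<le> 2*\<kappa> * D" using XYD[of n] \<kappa> by (intro mult_left_mono) auto
      have h2: "2*(\<beta> n * norm (Y n)) \<le> 2*(1 + 2*K0)" using bY1[of n] by simp
      show ?thesis using add_mono[OF h1 h2] by simp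
    qed
    finally show ?thesis unfolding R_def by simp
  qed
  have pqe: "p n - q n = (2*\<beta> n) *\<^sub>R (X n + Y n)" for n
    unfolding p_def q_def by (simp add: algebra_simps)
  have pqb: "norm (p n - q n) \<le> 2*(\<beta> n * norm (X n)) + 2*(\<beta> n * norm (Y n))" for n
  proof -
    have "norm (p n - q n) = 2*\<beta> n * norm (X n + Y n)" unfolding pqe using \<beta>p[of n] by simp
    also have "\<dots> \<le> 2*\<beta> n * (norm (X n) + norm (Y n))"
      using \<beta>p[of n] by (intro mult_left_mono norm_triangle_ineq) auto
    finally show ?thesis by (simp add: algebra_simps)
  qed
  have sql: "(\<lambda>n. sqrt (2*K0*\<beta> n)) \<longlonglongrightarrow> 0"
  proof -
    have "(\<lambda>n. sqrt (2*K0*\<beta> n)) \<longlonglongrightarrow> sqrt (2*K0*0)" by (intro tendsto_intros \<beta>l)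
    then show ?thesis by simp
  qed
  have bXl: "(\<lambda>n. \<beta> n * norm (X n)) \<longlonglongrightarrow> 0"
  proof (rule tendsto_sandwich[of "\<lambda>n. 0" _ _ "\<lambda>n. sqrt (2*K0*\<beta> n)"])
    show "\<forall>\<^sub>F n in sequentially. 0 \<le> \<beta> n * norm (X n)" using \<beta>p by (simp add: less_imp_le)
    show "\<forall>\<^sub>F n in sequentially. \<beta> n * norm (X n) \<le> sqrt (2*K0*\<beta> n)"
      using bXsq by (intro always_eventually allI real_le_rsqrt) auto
  qed (auto intro: sql)
  have bYl: "(\<lambda>n. \<beta> n * norm (Y n)) \<longlonglongrightarrow> 0"
  proof (rule tendsto_sandwich[of "\<lambda>n. 0" _ _ "\<lambda>n. sqrt (2*K0*\<beta> n)"])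
    show "\<forall>\<^sub>F n in sequentially. 0 \<le> \<beta> n * norm (Y n)" using \<beta>p by (simp add: less_imp_le)
    show "\<forall>\<^sub>F n in sequentially. \<beta> n * norm (Y n) \<le> sqrt (2*K0*\<beta> n)"
      using bYsq by (intro always_eventually allI real_le_rsqrt) auto
  qed (auto intro: sql)
  have pql: "(\<lambda>n. norm (p n - q n)) \<longlonglongrightarrow> 0"
  proof (rule tendsto_sandwich[of "\<lambda>n. 0" _ _ "\<lambda>n. 2*(\<beta> n * norm (X n)) + 2*(\<beta> n * norm (Y n))"])
    show "\<forall>\<^sub>F n in sequentially. norm (p n - q n) \<le> 2*(\<beta> n * norm (X n)) + 2*(\<beta> n * norm (Y n))"
      using pqb by (intro always_eventually allI) auto
    have "(\<lambda>n. 2*(\<beta> n * norm (X n)) + 2*(\<beta> n * norm (Y n))) \<longlonglongrightarrow> 2*0 + 2*0"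
      by (intro tendsto_intros bXl bYl)
    then show "(\<lambda>n. 2*(\<beta> n * norm (X n)) + 2*(\<beta> n * norm (Y n))) \<longlonglongrightarrow> 0" by simp
  qed auto

  define Et where "Et = (\<lambda>n. LINT z:{z. 0 < norm z}|\<mu>2. min (4*K0) (max (\<kappa>*((norm (X n + j2 (p n) z - (Y n + j2 (q n) z)))\<^sup>2 - (norm (X n - Y n))\<^sup>2)
             + \<beta> n*((norm (X n + j2 (p n) z))\<^sup>2 + (norm (Y n + j2 (q n) z))\<^sup>2 - (norm (X n))\<^sup>2 - (norm (Y n))\<^sup>2)) 0))"
  have \<kappa>0: "\<kappa> \<ge> 0" using \<kappa> by simp
  have \<beta>0: "\<And>n. \<beta> n \<ge> 0" using \<beta>p less_imp_le by blast
  have K00: "K0 \<ge> 0" using K0p by simp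
  have pR': "\<And>n. norm (p n) \<le> R" using pR by (smt (verit))
  have qR': "\<And>n. norm (q n) \<le> R" using qR by (smt (verit))
  have Etl: "Et \<longlonglongrightarrow> 0" unfolding Et_def
    by (rule Et_lim[OF \<kappa>0 \<beta>0 K00 \<beta>l pR' qR' pql XYD bXl bYl])
  have \<eta>k: "\<eta>0 / (2*\<kappa>+1) > 0" using \<eta>0 \<kappa> by simp
  obtain d\<omega> where d\<omega>: "d\<omega> > 0" "\<And>s. 0 < s \<Longrightarrow> s < d\<omega> \<Longrightarrow> \<omega>j s < \<eta>0 / (2*\<kappa>+1)"
    using modulus_small[OF \<omega>j(1) \<eta>k] by blast
  have ev1: "eventually (\<lambda>n. Et n < \<eta>0) sequentially" by (rule order_tendstoD(2)[OF Etl]) (use \<eta>0 in simp)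
  have ev2: "eventually (\<lambda>n. norm (p n - q n) < min d\<omega> (s0/4)) sequentially"
    by (rule order_tendstoD(2)[OF pql]) (use d\<omega>(1) s0(1) in simp)
  have bcl: "(\<lambda>n. \<beta> n * (2 * max C1 0)) \<longlonglongrightarrow> 0"
  proof -
    have "(\<lambda>n. \<beta> n * (2 * max C1 0)) \<longlonglongrightarrow> 0 * (2 * max C1 0)" by (intro tendsto_intros \<beta>l)
    then show ?thesis by simp
  qed
  have ev3: "eventually (\<lambda>n. \<beta> n * (2 * max C1 0) < \<eta>0/2) sequentially"
    by (rule order_tendstoD(2)[OF bcl]) (use \<eta>0 in simp)
  obtain N where N: "\<forall>n\<ge>N. Et n < \<eta>0 \<and> norm (p n - q n) < min d\<omega> (s0/4) \<and> \<beta> n * (2 * max C1 0) < \<eta>0/2"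
    using eventually_conj[OF ev1 eventually_conj[OF ev2 ev3]] unfolding eventually_sequentially by blast
  have EtN: "Et N < \<eta>0" and pqN: "norm (p N - q N) < d\<omega>" "norm (p N - q N) < s0/4"
    and bN: "\<beta> N * (2 * max C1 0) < \<eta>0/2" using N by auto
  have pN: "norm (p N) < R" using pR[of N] by linarith
  have qN: "norm (q N) < R" using qR[of N] by linarith
  define Eb where "Eb = (LINT z:{z. 0 < norm z}|\<mu>1. \<kappa>*(norm (j1 (p N) z - j1 (q N) z))\<^sup>2
       + \<beta> N*((norm (j1 (p N) z))\<^sup>2 + (norm (j1 (q N) z))\<^sup>2))"
  have Eb1: "Eb \<le> \<kappa> * (if p N = q N then 0 else \<omega>j (norm (p N - q N))) + \<beta> N * (2 * max C1 0)"
    unfolding Eb_def by (rule Eb_bound[OF \<kappa>0 \<beta>0[of N] C1 \<omega>j(2) modulus_nonneg[OF \<omega>j(1)] pN qN])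
  have errj: "(if p N = q N then 0 else \<omega>j (norm (p N - q N))) \<le> \<eta>0 / (2*\<kappa>+1)"
  proof (cases "p N = q N")
    case True then show ?thesis using \<eta>k by simp
  next
    case False
    then have "0 < norm (p N - q N)" by simp
    then show ?thesis using False d\<omega>(2) pqN(1) by (simp add: less_imp_le)
  qed
  have kerr: "\<kappa> * (\<eta>0 / (2*\<kappa>+1)) \<le> \<eta>0/2"
    using \<kappa> \<eta>0 by (simp add: field_simps)
  have EbN: "Eb < \<eta>0"
  proof -
    have "\<kappa> * (if p N = q N then 0 else \<omega>j (norm (p N - q N))) \<le> \<kappa> * (\<eta>0 / (2*\<kappa>+1))"
      by (rule mult_left_mono[OF errj \<kappa>0])
    then show ?thesis using Eb1 kerr bN by linarith
  qed
  have \<eta>k2: "\<eta>0 / (2*(\<kappa>+1)) > 0" using \<eta>0 \<kappa> by (simp add: add_pos_pos)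
  obtain \<delta> where \<delta>: "\<delta> > 0"
    "(LINT z:{z. 0 < norm z \<and> norm z < \<delta>}|\<mu>1. (norm (j1 (p N) z))\<^sup>2) < \<eta>0 / (2*(\<kappa>+1))"
    "(LINT z:{z. 0 < norm z \<and> norm z < \<delta>}|\<mu>1. (norm (j1 (q N) z))\<^sup>2) < \<eta>0 / (2*(\<kappa>+1))"
    using small_two[OF \<eta>k2] by blast
  define Es where "Es = (\<kappa>+\<beta> N) * ((LINT z:{z. 0 < norm z \<and> norm z < \<delta>}|\<mu>1. (norm (j1 (p N) z))\<^sup>2)
                 + (LINT z:{z. 0 < norm z \<and> norm z < \<delta>}|\<mu>1. (norm (j1 (q N) z))\<^sup>2))"
  have EsN: "Es < \<eta>0"
  proof -
    let ?I = "(LINT z:{z. 0 < norm z \<and> norm z < \<delta>}|\<mu>1. (norm (j1 (p N) z))\<^sup>2)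
                 + (LINT z:{z. 0 < norm z \<and> norm z < \<delta>}|\<mu>1. (norm (j1 (q N) z))\<^sup>2)"
    have I0: "0 \<le> ?I" using sq_nonneg_int[of _ "p N"] sq_nonneg_int[of _ "q N"] by simp
    have I1: "?I < 2 * (\<eta>0 / (2*(\<kappa>+1)))" using \<delta> by linarith
    have "(\<kappa>+\<beta> N) * ?I \<le> (\<kappa>+1) * ?I" using \<beta>1[of N] I0 by (intro mult_right_mono) auto
    also have "\<dots> < (\<kappa>+1) * (2 * (\<eta>0 / (2*(\<kappa>+1))))" using I1 \<kappa> by (intro mult_strict_left_mono) auto
    also have "\<dots> = \<eta>0" using \<kappa> by (simp add: field_simps)
    finally show ?thesis unfolding Es_def .
  qed
  define l1 where "l1 = L_small \<mu>1 j1 \<delta> (\<lambda>x. \<kappa>*(norm (x - Y N))\<^sup>2 + \<beta> N*(norm x)\<^sup>2) (p N) (X N)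
      + L_big \<mu>1 j1 \<delta> u (p N) (X N) + L_two \<mu>2 j2 u (p N) (X N)"
  define l2 where "l2 = L_small \<mu>1 j1 \<delta> (\<lambda>y. (-\<kappa>)*(norm (y - X N))\<^sup>2 + (-\<beta> N)*(norm y)\<^sup>2) (q N) (Y N)
      + L_big \<mu>1 j1 \<delta> v (q N) (Y N) + L_two \<mu>2 j2 v (q N) (Y N)"
  have mxu: "\<And>x. u x - \<kappa>*(norm(x - Y N))\<^sup>2 - \<beta> N*(norm x)\<^sup>2 \<le> u (X N) - \<kappa>*(norm(X N - Y N))\<^sup>2 - \<beta> N*(norm (X N))\<^sup>2"
  proof -
    fix x
    show "u x - \<kappa>*(norm(x - Y N))\<^sup>2 - \<beta> N*(norm x)\<^sup>2 \<le> u (X N) - \<kappa>*(norm(X N - Y N))\<^sup>2 - \<beta> N*(norm (X N))\<^sup>2"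
      using mx[where n=N and x=x and y="Y N"] unfolding distrib_left by linarith
  qed
  have mxv: "\<And>y. - v y - \<kappa>*(norm(X N - y))\<^sup>2 - \<beta> N*(norm y)\<^sup>2 \<le> - v (Y N) - \<kappa>*(norm(X N - Y N))\<^sup>2 - \<beta> N*(norm (Y N))\<^sup>2"
  proof -
    fix y
    show "- v y - \<kappa>*(norm(X N - y))\<^sup>2 - \<beta> N*(norm y)\<^sup>2 \<le> - v (Y N) - \<kappa>*(norm(X N - Y N))\<^sup>2 - \<beta> N*(norm (Y N))\<^sup>2"
      using mx[where n=N and x="X N" and y=y] unfolding distrib_left by linarith
  qed
  have subN: "F (u (X N)) (p N) l1 \<le> f (X N)"
  proof -
    have gm: "\<forall>y. u y - (\<kappa>*(norm (y - Y N))\<^sup>2 + \<beta> N*(norm y)\<^sup>2) \<le> u (X N) - (\<kappa>*(norm (X N - Y N))\<^sup>2 + \<beta> N*(norm (X N))\<^sup>2)"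
      using mxu by (simp add: algebra_simps)
    show ?thesis unfolding l1_def p_def
      by (rule subc[OF \<delta>(1) C2_quad[of \<kappa> "Y N" "\<beta> N"]]) (use gm in simp)
  qed
  have supN: "F (v (Y N)) (q N) l2 \<ge> f (Y N)"
  proof -
    have gm: "\<forall>y. v (Y N) - ((-\<kappa>)*(norm (Y N - X N))\<^sup>2 + (-\<beta> N)*(norm (Y N))\<^sup>2) \<le> v y - ((-\<kappa>)*(norm (y - X N))\<^sup>2 + (-\<beta> N)*(norm y)\<^sup>2)"
      using mxv by (simp add: algebra_simps norm_minus_commute)
    show ?thesis unfolding l2_def q_def
      by (rule supc[OF \<delta>(1) C2_quad[of "-\<kappa>" "X N" "-\<beta> N"]]) (use gm in simp)
  qed
  have pNe: "p N = (2*\<kappa>) *\<^sub>R (X N - Y N) + (2*\<beta> N) *\<^sub>R X N" by (simp add: p_def)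
  have qNe: "q N = (2*(-\<kappa>)) *\<^sub>R (Y N - X N) + (2*(-\<beta> N)) *\<^sub>R Y N" by (simp add: q_def)
  have stepN: "l1 \<le> l2 + Es + Eb + Et N"
    unfolding l1_def l2_def Es_def Eb_def Et_def
    by (rule step[OF um vm Ku Kv \<delta>(1) \<kappa>0 \<beta>0[of N] mx[where n=N] pNe qNe])
  have upN: "l1 \<le> A"
  proof -
    have "l1 \<le> (\<kappa>+\<beta> N) * (LINT z:{z. 0 < norm z}|\<mu>1. (norm (j1 (p N) z))\<^sup>2) + 2*K0 * m2"
      unfolding l1_def m2_def by (rule step_up[OF um Ku \<delta>(1) mxu pNe])
    moreover have "(\<kappa>+\<beta> N) * (LINT z:{z. 0 < norm z}|\<mu>1. (norm (j1 (p N) z))\<^sup>2) \<le> (\<kappa>+1) * max C1 0"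
    proof -
      have "(\<kappa>+\<beta> N) * (LINT z:{z. 0 < norm z}|\<mu>1. (norm (j1 (p N) z))\<^sup>2) \<le> (\<kappa>+\<beta> N) * max C1 0"
        using sqint1_bound[OF C1 pN] \<kappa>0 \<beta>0[of N] by (intro mult_left_mono) auto
      also have "\<dots> \<le> (\<kappa>+1) * max C1 0" using \<beta>1[of N] by (intro mult_right_mono) auto
      finally show ?thesis .
    qed
    ultimately show ?thesis unfolding A_def by linarith
  qed
  have lowN: "l2 \<ge> - A"
  proof -
    have "l2 \<ge> - ((\<kappa>+\<beta> N) * (LINT z:{z. 0 < norm z}|\<mu>1. (norm (j1 (q N) z))\<^sup>2)) - 2*K0 * m2"
      unfolding l2_def m2_def by (rule step_low[OF vm Kv \<delta>(1) mxv qNe])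
    moreover have "(\<kappa>+\<beta> N) * (LINT z:{z. 0 < norm z}|\<mu>1. (norm (j1 (q N) z))\<^sup>2) \<le> (\<kappa>+1) * max C1 0"
    proof -
      have "(\<kappa>+\<beta> N) * (LINT z:{z. 0 < norm z}|\<mu>1. (norm (j1 (q N) z))\<^sup>2) \<le> (\<kappa>+\<beta> N) * max C1 0"
        using sqint1_bound[OF C1 qN] \<kappa>0 \<beta>0[of N] by (intro mult_left_mono) auto
      also have "\<dots> \<le> (\<kappa>+1) * max C1 0" using \<beta>1[of N] by (intro mult_right_mono) auto
      finally show ?thesis .
    qed
    ultimately show ?thesis unfolding A_def by linarith
  qed
  define \<eta> where "\<eta> = 3 * \<eta>0"
  have l12: "l1 < l2 + \<eta>" using stepN EsN EbN EtN[unfolded Et_def] unfolding \<eta>_def Et_def by linarith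
  define l' where "l' = max l1 (- A - \<eta>)"
  define l'' where "l'' = l' - \<eta>"
  have \<eta>b: "0 < \<eta>" "\<eta> \<le> 1" unfolding \<eta>_def using \<eta>0 by auto
  have l'1: "l1 \<le> l'" unfolding l'_def by simp
  have l''2: "l'' \<le> l2" unfolding l''_def l'_def using l12 lowN \<eta>b by (auto simp: max_def)
  have l'b: "\<bar>l'\<bar> \<le> r" unfolding l'_def r_def using upN A0 \<eta>b Rp by (auto simp: max_def)
  have l''b: "\<bar>l''\<bar> \<le> r" unfolding l''_def l'_def r_def using upN A0 \<eta>b Rp by (auto simp: max_def)
  have Fmono: "\<And>a p l l'. l \<le> l' \<Longrightarrow> F a p l \<ge> F a p l'" using F1 unfolding hypF1_def by blast
  have c1: "F (u (X N)) (p N) l' \<le> f (X N)" using Fmono[OF l'1, of "u (X N)" "p N"] subN by linarith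
  have c2: "F (v (Y N)) (q N) l'' \<ge> f (Y N)" using Fmono[OF l''2, of "v (Y N)" "q N"] supN by linarith
  have c3: "F (u (X N)) (p N) l' - F (v (Y N)) (p N) l' \<ge> \<gamma> * (u (X N) - v (Y N))"
  proof (rule \<gamma>(2))
    show "- K0 \<le> v (Y N)" using Kv[of "Y N"] by (simp add: abs_le_iff)
    show "u (X N) \<le> K0" using Ku[of "X N"] by (simp add: abs_le_iff)
    show "v (Y N) \<le> u (X N)" using gap[of N] m by linarith
  qed
  have c4: "\<bar>F (v (Y N)) (p N) l' - F (v (Y N)) (q N) l''\<bar> \<le> \<omega>F (norm (p N - q N) + \<bar>l' - l''\<bar>)"
    by (rule \<omega>F(2)[OF Kv]) (use pR[of N] qR[of N] l'b l''b r_def A0 in auto)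
  have c5: "\<omega>F (norm (p N - q N) + \<bar>l' - l''\<bar>) < e"
  proof (rule s0(2))
    have ll: "\<bar>l' - l''\<bar> = \<eta>" unfolding l''_def using \<eta>b by simp
    show "0 < norm (p N - q N) + \<bar>l' - l''\<bar>" unfolding ll using \<eta>b norm_ge_zero[of "p N - q N"] by linarith
    show "norm (p N - q N) + \<bar>l' - l''\<bar> < s0" unfolding l''_def \<eta>_def using pqN(2) \<eta>0 by simp
  qed
  have c6: "\<bar>f (X N) - f (Y N)\<bar> < e" using d(2)[of "X N" "Y N"] XYd[of N] by (simp add: dist_norm)
  have "\<gamma> * (u (X N) - v (Y N)) < 2 * e" using c1 c2 c3 c4 c5 c6 by (simp add: abs_le_iff abs_less_iff)
  moreover have "\<gamma> * (m/2) \<le> \<gamma> * (u (X N) - v (Y N))" using gap[of N] \<gamma>(1) by (intro mult_left_mono) auto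
  moreover have "2 * e = (\<gamma> * m) / 4" unfolding e_def by simp
  moreover have "\<gamma> * (m/2) = (\<gamma> * m) / 2" by simp
  moreover have "\<gamma> * m > 0" using \<gamma>(1) m by simp
  ultimately show False by linarith
qed

end

theorem theorem2p1:
  fixes \<mu>1 \<mu>2 :: "'z::euclidean_space measure"
    and j1 j2 :: "'n::euclidean_space \<Rightarrow> 'z \<Rightarrow> 'n"
    and f :: "'n \<Rightarrow> real"
  assumes radon1: "radon_punctured \<mu>1" and radon2: "radon_punctured \<mu>2"
    and j1_meas: "(\<lambda>(p, z). j1 p z) \<in> borel_measurable borel"
    and j2_meas: "(\<lambda>(p, z). j2 p z) \<in> borel_measurable borel"
    and M: "hypM \<mu>1 \<mu>2"
    and J1: "hypJ1 \<mu>1 \<mu>2 j1 j2"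
    and J2: "hypJ2 \<mu>1 j1"
    and F4: "hypF4 f"
  shows "(\<forall>u v. visc_sub (\<lambda>w p l. w - l) f \<mu>1 \<mu>2 j1 j2 u
                 \<and> visc_super (\<lambda>w p l. w - l) f \<mu>1 \<mu>2 j1 j2 v
                 \<longrightarrow> (\<forall>x. u x \<le> v x))
       \<and> (\<forall>F. hypF1 F \<and> hypF2 F \<and> hypF3 F \<longrightarrow>
            (\<forall>u v. visc_sub F f \<mu>1 \<mu>2 j1 j2 u \<and> visc_super F f \<mu>1 \<mu>2 j1 j2 v
                 \<longrightarrow> (\<forall>x. u x \<le> v x)))"
proof -
  interpret nl \<mu>1 \<mu>2 j1 j2
    using radon1 radon2 j1_meas j2_meas M J1 J2 by unfold_locales (auto simp: radon_punctured_def)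
  have gen: "\<And>F u v x. hypF1 F \<Longrightarrow> hypF2 F \<Longrightarrow> hypF3 F \<Longrightarrow> visc_sub F f \<mu>1 \<mu>2 j1 j2 u
      \<Longrightarrow> visc_super F f \<mu>1 \<mu>2 j1 j2 v \<Longrightarrow> u x \<le> v x"
    using comparison F4 by blast
  have h1: "hypF1 (\<lambda>w (p::'n) l. w - l)"
    unfolding hypF1_def
  proof
    show "continuous_on UNIV (\<lambda>(u::real, p::'n, l::real). u - l)"
      by (simp add: case_prod_unfold) (intro continuous_intros)
  qed auto
  have h2: "hypF2 (\<lambda>w (p::'n) l. w - l)"
    unfolding hypF2_def by (intro allI impI exI[of _ 1]) auto
  have h3: "hypF3 (\<lambda>w (p::'n) l. w - l)"
    unfolding hypF3_def
  proof (intro allI impI exI[of _ "\<lambda>s. s"] conjI)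
    show "modulus (\<lambda>s. s)" unfolding modulus_def by (auto intro: tendsto_ident_at)
  next
    fix M r u l l' :: real and p q :: 'n
    have "\<bar>l' - l\<bar> = \<bar>l - l'\<bar>" by simp
    then show "\<bar>(u - l) - (u - l')\<bar> \<le> norm (p - q) + \<bar>l - l'\<bar>" using norm_ge_zero[of "p - q"] by simp
  qed
  show ?thesis using gen h1 h2 h3 by blast
qed

end
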